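(* Let $X,X_1,X_2,\dots$ be random variables in a sub-linear expectation space $(\Omega,\mathscr H,\hat{\mathbb E})$ with $\{X_n\}$ independent, $X_n\overset d=X$ for all $n$, and $\hat{\mathbb E}[X]=\hat{\mathcal E}[X]=0$. Let $S_n=\sum_{i=1}^nX_i$, $V_n^2=\sum_{i=1}^nX_i^2$, $l(x)=\hat{\mathbb E}[X^2\wedge x^2]$, and assume: (I) $\mathbb V(|X|\ge x)=o(x^{-2}l(x))$ as $x\to\infty$; (II) $\limsup_{x\to\infty}\hat{\mathbb E}[X^2\wedge x^2]/\hat{\mathcal E}[X^2\wedge x^2]<\infty$; (III) $\hat{\mathbb E}[(|X|-c)^+]\to0$ as $c\to\infty$; (IV) $x_n\to\infty$ and $x_n=o(\sqrt n)$. Let $b_0=\inf\{x\ge0:l(x)>0\}$ and $z_n=\inf\{s\ge b_0+1: l(s)/s^2\le x_n^2/n\}$. Then for every $0<\delta<1$, as $n\to\infty$, $$\mathbb V\big(S_n\ge x_nV_n,\ \delta nl(z_n)\le V_n^2\le 9nl(z_n)\big)\le\exp\Big\{-\frac{x_n^2}{2}+o(x_n^2)\Big\}.$$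
   Context: Sub-linear expectation space: $\mathscr H$ is a linear space of real functions on a measurable space $(\Omega,\mathcal F)$, closed under $\varphi(X_1,\dots,X_n)$ for $\varphi$ bounded continuous or locally Lipschitz with polynomial growth; $\hat{\mathbb E}:\mathscr H\to[-\infty,\infty]$ is monotone, constant preserving, sub-additive and positively homogeneous. $\hat{\mathcal E}[X]=-\hat{\mathbb E}[-X]$; $\mathbb V(A)=\inf\{\hat{\mathbb E}[\xi]:I_A\le\xi,\xi\in\mathscr H\}$. Independence: $\mathbf Y$ is independent of $\mathbf X$ if $\hat{\mathbb E}[\varphi(\mathbf X,\mathbf Y)]=\hat{\mathbb E}[\hat{\mathbb E}[\varphi(\mathbf x,\mathbf Y)]|_{\mathbf x=\mathbf X}]$ for all locally Lipschitz $\varphi$ of polynomial growth (whenever the relevant expectations are finite); $\{X_n\}$ is independent if $X_{i+1}$ is independent of $(X_1,\dots,X_i)$ for each $i$. $X_n\overset d=X$ means $\hat{\mathbb E}[\varphi(X_n)]=\hat{\mathbb E}[\varphi(X)]$ for all such $\varphi$. $a\wedge b=\min(a,b)$. *)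

theory Defs
  imports "HOL-Analysis.Analysis" "HOL-Library.Landau_Symbols"
begin

definition vnorm :: "real list \<Rightarrow> real" where
  "vnorm xs = sqrt (sum_list (map (\<lambda>x. x\<^sup>2) xs))"

definition vdiff :: "real list \<Rightarrow> real list \<Rightarrow> real list" where
  "vdiff xs ys = map2 (-) xs ys"

definition lLip :: "nat \<Rightarrow> (real list \<Rightarrow> real) \<Rightarrow> bool" where
  "lLip n \<phi> \<longleftrightarrow> (\<exists>C (m::nat). \<forall>x y. length x = n \<longrightarrow> length y = n \<longrightarrow>
      \<bar>\<phi> x - \<phi> y\<bar> \<le> C * (1 + vnorm x ^ m + vnorm y ^ m) * vnorm (vdiff x y))"

definition bcont :: "nat \<Rightarrow> (real list \<Rightarrow> real) \<Rightarrow> bool" where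
  "bcont n \<phi> \<longleftrightarrow> (\<exists>B. \<forall>x. length x = n \<longrightarrow> \<bar>\<phi> x\<bar> \<le> B) \<and>
     (\<forall>x. length x = n \<longrightarrow> (\<forall>e>0. \<exists>d>0. \<forall>y. length y = n \<longrightarrow>
         vnorm (vdiff y x) < d \<longrightarrow> \<bar>\<phi> y - \<phi> x\<bar> < e))"

definition vec :: "('w \<Rightarrow> real) list \<Rightarrow> 'w \<Rightarrow> real list" where
  "vec Xs \<omega> = map (\<lambda>f. f \<omega>) Xs"

definition sublinear_expectation_space ::
  "('w \<Rightarrow> real) set \<Rightarrow> (('w \<Rightarrow> real) \<Rightarrow> ereal) \<Rightarrow> bool" where
  "sublinear_expectation_space H E \<longleftrightarrow>
     (\<forall>c. (\<lambda>_. c) \<in> H) \<and>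
     (\<forall>X\<in>H. \<forall>Y\<in>H. (\<lambda>\<omega>. X \<omega> + Y \<omega>) \<in> H) \<and>
     (\<forall>X\<in>H. \<forall>c. (\<lambda>\<omega>. c * X \<omega>) \<in> H) \<and>
     (\<forall>Xs \<phi>. set Xs \<subseteq> H \<longrightarrow> (bcont (length Xs) \<phi> \<or> lLip (length Xs) \<phi>) \<longrightarrow>
         (\<lambda>\<omega>. \<phi> (vec Xs \<omega>)) \<in> H) \<and>
     (\<forall>X\<in>H. \<forall>Y\<in>H. (\<forall>\<omega>. X \<omega> \<le> Y \<omega>) \<longrightarrow> E X \<le> E Y) \<and>
     (\<forall>c. E (\<lambda>_. c) = ereal c) \<and>
     (\<forall>X\<in>H. \<forall>Y\<in>H. E (\<lambda>\<omega>. X \<omega> + Y \<omega>) \<le> E X + E Y) \<and>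
     (\<forall>X\<in>H. \<forall>c>0. E (\<lambda>\<omega>. c * X \<omega>) = ereal c * E X)"

definition lowerE :: "(('w \<Rightarrow> real) \<Rightarrow> ereal) \<Rightarrow> ('w \<Rightarrow> real) \<Rightarrow> ereal" where
  "lowerE E X = - E (\<lambda>\<omega>. - X \<omega>)"

definition capV :: "('w \<Rightarrow> real) set \<Rightarrow> (('w \<Rightarrow> real) \<Rightarrow> ereal) \<Rightarrow> 'w set \<Rightarrow> ereal" where
  "capV H E A = Inf {E \<xi> | \<xi>. \<xi> \<in> H \<and> (\<forall>\<omega>. indicator A \<omega> \<le> \<xi> \<omega>)}"

definition indep_of ::
  "('w \<Rightarrow> real) set \<Rightarrow> (('w \<Rightarrow> real) \<Rightarrow> ereal) \<Rightarrow> ('w \<Rightarrow> real) \<Rightarrow> ('w \<Rightarrow> real) list \<Rightarrow> bool" where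
  "indep_of H E Y Xs \<longleftrightarrow>
     (\<forall>\<phi>. lLip (Suc (length Xs)) \<phi> \<longrightarrow>
        (\<forall>x. length x = length Xs \<longrightarrow> \<bar>E (\<lambda>\<omega>. \<phi> (x @ [Y \<omega>]))\<bar> \<noteq> \<infinity>) \<longrightarrow>
        E (\<lambda>\<omega>. \<phi> (vec Xs \<omega> @ [Y \<omega>])) =
        E (\<lambda>\<omega>. real_of_ereal (E (\<lambda>\<omega>'. \<phi> (vec Xs \<omega> @ [Y \<omega>'])))))"

definition indep_seq ::
  "('w \<Rightarrow> real) set \<Rightarrow> (('w \<Rightarrow> real) \<Rightarrow> ereal) \<Rightarrow> (nat \<Rightarrow> 'w \<Rightarrow> real) \<Rightarrow> bool" where
  "indep_seq H E X \<longleftrightarrow> (\<forall>i\<ge>1. indep_of H E (X (i+1)) (map X [1..<i+1]))"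

definition ident_distr ::
  "(('w \<Rightarrow> real) \<Rightarrow> ereal) \<Rightarrow> ('w \<Rightarrow> real) \<Rightarrow> ('w \<Rightarrow> real) \<Rightarrow> bool" where
  "ident_distr E Y X \<longleftrightarrow> (\<forall>\<phi>. lLip 1 \<phi> \<longrightarrow> E (\<lambda>\<omega>. \<phi> [Y \<omega>]) = E (\<lambda>\<omega>. \<phi> [X \<omega>]))"

end

theory Submission
  imports Defs
begin

locale sle =
  fixes H :: "('w \<Rightarrow> real) set" and E :: "('w \<Rightarrow> real) \<Rightarrow> ereal"
  assumes space: "sublinear_expectation_space H E"
begin

lemma const_H: "(\<lambda>_. c) \<in> H" using space unfolding sublinear_expectation_space_def by blast
lemma add_H: "U \<in> H \<Longrightarrow> V \<in> H \<Longrightarrow> (\<lambda>\<omega>. U \<omega> + V \<omega>) \<in> H"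
  using space unfolding sublinear_expectation_space_def by blast
lemma smult_H: "U \<in> H \<Longrightarrow> (\<lambda>\<omega>. c * U \<omega>) \<in> H"
  using space unfolding sublinear_expectation_space_def by blast
lemma comp_H: "set Xs \<subseteq> H \<Longrightarrow> lLip (length Xs) \<phi> \<Longrightarrow> (\<lambda>\<omega>. \<phi> (vec Xs \<omega>)) \<in> H"
  using space unfolding sublinear_expectation_space_def by blast
lemma mono_E: "U \<in> H \<Longrightarrow> V \<in> H \<Longrightarrow> (\<And>\<omega>. U \<omega> \<le> V \<omega>) \<Longrightarrow> E U \<le> E V"
  using space unfolding sublinear_expectation_space_def by blast
lemma E_const: "E (\<lambda>_. c) = ereal c"
  using space unfolding sublinear_expectation_space_def by blast
lemma subadd: "U \<in> H \<Longrightarrow> V \<in> H \<Longrightarrow> E (\<lambda>\<omega>. U \<omega> + V \<omega>) \<le> E U + E V"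
  using space unfolding sublinear_expectation_space_def by blast
lemma homog: "U \<in> H \<Longrightarrow> c > 0 \<Longrightarrow> E (\<lambda>\<omega>. c * U \<omega>) = ereal c * E U"
  using space unfolding sublinear_expectation_space_def by blast

lemma vnorm_single: "vnorm [a] = \<bar>a\<bar>" by (simp add: vnorm_def)
lemma vdiff_single: "vdiff [a] [b] = [a - b]" by (simp add: vdiff_def)

lemma lip1_H:
  assumes U: "U \<in> H" and lip: "\<And>a b. \<bar>\<phi> a - \<phi> b\<bar> \<le> C * (1 + \<bar>a\<bar>^m + \<bar>b\<bar>^m) * \<bar>a - b\<bar>"
  shows "(\<lambda>\<omega>. \<phi> (U \<omega>)) \<in> H"
proof -
  have "lLip 1 (\<lambda>v. \<phi> (hd v))"
    unfolding lLip_def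
  proof (intro exI allI impI)
    fix x y :: "real list" assume "length x = 1" "length y = 1"
    then obtain a b where "x = [a]" "y = [b]"
      by (metis One_nat_def length_0_conv length_Suc_conv)
    then show "\<bar>\<phi> (hd x) - \<phi> (hd y)\<bar> \<le> C * (1 + vnorm x ^ m + vnorm y ^ m) * vnorm (vdiff x y)"
      using lip[of a b] by (simp add: vnorm_single vdiff_single)
  qed
  moreover have "(\<lambda>\<omega>. \<phi> (hd (vec [U] \<omega>))) = (\<lambda>\<omega>. \<phi> (U \<omega>))" by (simp add: vec_def)
  ultimately show ?thesis using comp_H[of "[U]" "\<lambda>v. \<phi> (hd v)"] U by simp
qed

lemma E_bounds:
  assumes "U \<in> H" "\<And>\<omega>. a \<le> U \<omega>" "\<And>\<omega>. U \<omega> \<le> b"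
  shows "ereal a \<le> E U" "E U \<le> ereal b" "E U = ereal (real_of_ereal (E U))"
    "a \<le> real_of_ereal (E U)" "real_of_ereal (E U) \<le> b"
proof -
  show 1: "ereal a \<le> E U" using mono_E[OF const_H assms(1), of a] assms E_const by metis
  show 2: "E U \<le> ereal b" using mono_E[OF assms(1) const_H, of b] assms E_const by metis
  show 3: "E U = ereal (real_of_ereal (E U))" using 1 2 by (cases "E U") auto
  show "a \<le> real_of_ereal (E U)" using 1 3 by (metis ereal_less_eq(3))
  show "real_of_ereal (E U) \<le> b" using 2 3 by (metis ereal_less_eq(3))
qed

lemma E_add_const: "U \<in> H \<Longrightarrow> E (\<lambda>\<omega>. U \<omega> + c) \<le> E U + ereal c"
  using subadd[OF _ const_H, of U c] E_const by simp

lemma E_nonneg: "U \<in> H \<Longrightarrow> (\<And>\<omega>. 0 \<le> U \<omega>) \<Longrightarrow> 0 \<le> E U"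
  using mono_E[OF const_H, of U 0] E_const by (simp add: zero_ereal_def)

lemma capV_le: "\<xi> \<in> H \<Longrightarrow> (\<And>\<omega>. indicator A \<omega> \<le> \<xi> \<omega>) \<Longrightarrow> capV H E A \<le> E \<xi>"
  unfolding capV_def by (rule Inf_lower) blast

lemma le_capV:
  assumes W: "W \<in> H" and t: "t > 0" and dom: "\<And>\<xi> \<omega>. \<xi> \<in> H \<Longrightarrow> (\<forall>\<omega>. indicator A \<omega> \<le> \<xi> \<omega>) \<Longrightarrow> W \<omega> \<le> t * \<xi> \<omega>"
  shows "E W \<le> ereal t * capV H E A"
proof -
  have "ereal (1/t) * E W \<le> capV H E A"
    unfolding capV_def
  proof (rule Inf_greatest, clarify)
    fix \<xi> assume \<xi>: "\<xi> \<in> H" "\<forall>\<omega>. indicator A \<omega> \<le> \<xi> \<omega>"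
    have "E W \<le> E (\<lambda>\<omega>. t * \<xi> \<omega>)" using mono_E[OF W smult_H[OF \<xi>(1)]] dom \<xi> by blast
    also have "\<dots> = ereal t * E \<xi>" using homog[OF \<xi>(1) t] .
    finally have "ereal (1/t) * E W \<le> ereal (1/t) * (ereal t * E \<xi>)"
      using t by (intro ereal_mult_left_mono) auto
    also have "\<dots> = (ereal (1/t) * ereal t) * E \<xi>" by (rule mult.assoc[symmetric])
    also have "ereal (1/t) * ereal t = 1" using t by (simp add: one_ereal_def)
    finally have "ereal (1/t) * E W \<le> E \<xi>" by simp
    then show "ereal (1/t) * E W \<le> E \<xi>" .
  qed
  then have "ereal t * (ereal (1/t) * E W) \<le> ereal t * capV H E A"
    using t by (intro ereal_mult_left_mono) auto
  also have "ereal t * (ereal (1/t) * E W) = (ereal t * ereal (1/t)) * E W" by (rule mult.assoc[symmetric])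
  also have "ereal t * ereal (1/t) = 1" using t by (simp add: one_ereal_def)
  finally show ?thesis by simp
qed

end

lemma sum_list_map_nonneg_le:
  fixes f :: "real \<Rightarrow> real"
  assumes "\<And>a. 0 \<le> f a" "j < length xs" shows "f (xs ! j) \<le> sum_list (map f xs)"
  using assms(2)
proof (induction xs arbitrary: j)
  case Nil then show ?case by simp
next
  case (Cons a xs)
  show ?case
  proof (cases j)
    case 0 then show ?thesis using assms(1) sum_list_nonneg[of "map f xs"] by auto
  next
    case (Suc k) then show ?thesis using Cons assms(1)[of a] by (force intro: add_increasing)
  qed
qed

lemma nth_le_vnorm: "j < length x \<Longrightarrow> \<bar>x ! j\<bar> \<le> vnorm x"
  unfolding vnorm_def
  using sum_list_map_nonneg_le[of "\<lambda>a. a\<^sup>2" j x]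
  by (metis real_sqrt_abs real_sqrt_le_mono zero_le_power2)

lemma nth_vdiff: "j < length x \<Longrightarrow> length x = length y \<Longrightarrow> vdiff x y ! j = x ! j - y ! j"
  by (simp add: vdiff_def)

lemma nth_diff_le_vnorm: "j < length x \<Longrightarrow> length x = length y \<Longrightarrow> \<bar>x ! j - y ! j\<bar> \<le> vnorm (vdiff x y)"
  using nth_le_vnorm[of j "vdiff x y"] nth_vdiff[of j x y] by (simp add: vdiff_def)

lemma prod_list_diff:
  fixes g :: "real \<Rightarrow> real"
  assumes "length xs = length ys" "\<And>a. 0 \<le> g a" "\<And>a. g a \<le> M" "1 \<le> M"
    "\<And>j. j < length xs \<Longrightarrow> \<bar>g (xs!j) - g (ys!j)\<bar> \<le> D"
  shows "\<bar>prod_list (map g xs) - prod_list (map g ys)\<bar> \<le> real (length xs) * M ^ length xs * D"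
  using assms(1,5)
proof (induction xs arbitrary: ys)
  case Nil then show ?case by simp
next
  case (Cons a xs)
  then obtain b ys' where ys: "ys = b # ys'" by (cases ys) auto
  have len: "length xs = length ys'" using Cons ys by simp
  have IH: "\<bar>prod_list (map g xs) - prod_list (map g ys')\<bar> \<le> real (length xs) * M ^ length xs * D"
    using Cons.IH[OF len] Cons.prems(2)[of "Suc _"] ys by auto
  have D0: "\<bar>g a - g b\<bar> \<le> D" using Cons.prems(2)[of 0] ys by simp
  have D: "0 \<le> D" using D0 by linarith
  have Qb: "0 \<le> prod_list (map g ys')" "prod_list (map g ys') \<le> M ^ length xs"
  proof -
    have "\<forall>ys'. length ys' = k \<longrightarrow> 0 \<le> prod_list (map g ys') \<and> prod_list (map g ys') \<le> M ^ k" for k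
    proof (induction k)
      case 0 then show ?case by simp
    next
      case (Suc k)
      show ?case
      proof (intro allI impI)
        fix zs :: "real list" assume "length zs = Suc k"
        then obtain c zs' where "zs = c # zs'" "length zs' = k" by (cases zs) auto
        then show "0 \<le> prod_list (map g zs) \<and> prod_list (map g zs) \<le> M ^ Suc k"
          using Suc assms(2,3)[of c] by (auto intro: mult_mono)
      qed
    qed
    then show "0 \<le> prod_list (map g ys')" "prod_list (map g ys') \<le> M ^ length xs" using len by auto
  qed
  have "\<bar>g a * prod_list (map g xs) - g b * prod_list (map g ys')\<bar>
        \<le> g a * \<bar>prod_list (map g xs) - prod_list (map g ys')\<bar> + prod_list (map g ys') * \<bar>g a - g b\<bar>"
  proof -
    have "g a * prod_list (map g xs) - g b * prod_list (map g ys')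
       = g a * (prod_list (map g xs) - prod_list (map g ys')) + prod_list (map g ys') * (g a - g b)"
      by (simp add: algebra_simps)
    then have "\<bar>g a * prod_list (map g xs) - g b * prod_list (map g ys')\<bar>
      \<le> \<bar>g a * (prod_list (map g xs) - prod_list (map g ys'))\<bar> + \<bar>prod_list (map g ys') * (g a - g b)\<bar>"
      by (metis abs_triangle_ineq)
    then show ?thesis using assms(2)[of a] Qb by (simp add: abs_mult)
  qed
  also have "\<dots> \<le> M * (real (length xs) * M ^ length xs * D) + M ^ length xs * D"
  proof (rule add_mono)
    show "g a * \<bar>prod_list (map g xs) - prod_list (map g ys')\<bar> \<le> M * (real (length xs) * M ^ length xs * D)"
      using IH assms(2,3)[of a] assms(4) by (intro mult_mono) auto
    show "prod_list (map g ys') * \<bar>g a - g b\<bar> \<le> M ^ length xs * D"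
      using Qb D0 D by (intro mult_mono) auto
  qed
  also have "\<dots> \<le> real (length (a # xs)) * M ^ length (a # xs) * D"
  proof -
    have "M ^ length xs \<le> M ^ Suc (length xs)" using assms(4) by (simp add: power_increasing)
    then have "M ^ length xs * D \<le> M ^ Suc (length xs) * D" using D by (rule mult_right_mono)
    then show ?thesis by (simp add: algebra_simps)
  qed
  finally show ?case using ys by simp
qed

lemma lLip_prod:
  fixes g :: "real \<Rightarrow> real"
  assumes "\<And>a. 0 \<le> g a" "\<And>a. g a \<le> M" "1 \<le> M" "0 \<le> L"
    "\<And>a b. \<bar>g a - g b\<bar> \<le> L * (1 + \<bar>a\<bar> + \<bar>b\<bar>) * \<bar>a - b\<bar>"
  shows "lLip n (\<lambda>v. prod_list (map g v))"
  unfolding lLip_def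
proof (intro exI[of _ "real n * M ^ n * L"] exI[of _ 1] allI impI)
  fix x y :: "real list" assume len: "length x = n" "length y = n"
  let ?D = "L * (1 + vnorm x + vnorm y) * vnorm (vdiff x y)"
  have "\<bar>prod_list (map g x) - prod_list (map g y)\<bar> \<le> real (length x) * M ^ length x * ?D"
  proof (rule prod_list_diff)
    fix j assume j: "j < length x"
    have "\<bar>g (x!j) - g (y!j)\<bar> \<le> L * (1 + \<bar>x!j\<bar> + \<bar>y!j\<bar>) * \<bar>x!j - y!j\<bar>" by (rule assms(5))
    also have "\<dots> \<le> ?D"
      using nth_le_vnorm[OF j] nth_le_vnorm[of j y] nth_diff_le_vnorm[OF j] len j assms(4)
      by (intro mult_mono) auto
    finally show "\<bar>g (x!j) - g (y!j)\<bar> \<le> ?D" .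
  qed (use len assms in auto)
  then show "\<bar>prod_list (map g x) - prod_list (map g y)\<bar>
         \<le> real n * M ^ n * L * (1 + vnorm x ^ 1 + vnorm y ^ 1) * vnorm (vdiff x y)"
    using len by (simp add: mult.assoc)
qed

context sle begin

lemma E_scale:
  assumes U: "U \<in> H" and m: "E U = ereal m" and p: "0 \<le> p"
  shows "E (\<lambda>\<omega>. p * U \<omega>) = ereal (p * m)"
proof (cases "p = 0")
  case True then show ?thesis using E_const[of 0] by simp
next
  case False then show ?thesis using homog[OF U, of p] p m by simp
qed

lemma vec_map: "vec (map X js) \<omega> = map (\<lambda>j. X j \<omega>) js"
  by (simp add: vec_def)

lemma prod_H:
  assumes XH: "\<And>n. n \<ge> 1 \<Longrightarrow> X n \<in> H"
    and lip: "lLip n (\<lambda>v. prod_list (map g v))"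
  shows "(\<lambda>\<omega>. prod_list (map (\<lambda>j. g (X j \<omega>)) [1..<n+1])) \<in> H"
proof -
  have s: "set (map X [1..<n+1]) \<subseteq> H" using XH by (auto simp del: upt_Suc)
  have len: "length (map X [1..<n+1]) = n" by (simp del: upt_Suc)
  have "(\<lambda>\<omega>. prod_list (map g (vec (map X [1..<n+1]) \<omega>))) \<in> H"
    using comp_H[OF s, of "\<lambda>v. prod_list (map g v)"] lip unfolding len by blast
  then show ?thesis by (simp only: vec_map map_map o_def)
qed

lemma prod_list_nonneg_map: "(\<And>a. 0 \<le> (g::real\<Rightarrow>real) a) \<Longrightarrow> 0 \<le> prod_list (map g x)"
  by (induction x) auto

lemma indep_prod:
  fixes g :: "real \<Rightarrow> real" and X :: "nat \<Rightarrow> 'w \<Rightarrow> real"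
  assumes XH: "\<And>n. n \<ge> 1 \<Longrightarrow> X n \<in> H" and X0H: "X0 \<in> H"
    and indep: "indep_seq H E X"
    and distr: "\<And>n. n \<ge> 1 \<Longrightarrow> ident_distr E (X n) X0"
    and g0: "\<And>a. 0 \<le> g a" and gM: "\<And>a. g a \<le> M" and M1: "1 \<le> M" and L0: "0 \<le> L"
    and glip: "\<And>a b. \<bar>g a - g b\<bar> \<le> L * (1 + \<bar>a\<bar> + \<bar>b\<bar>) * \<bar>a - b\<bar>"
  shows "E (\<lambda>\<omega>. prod_list (map (\<lambda>j. g (X j \<omega>)) [1..<n+1])) = ereal ((real_of_ereal (E (\<lambda>\<omega>. g (X0 \<omega>)))) ^ n)"
proof -
  let ?m = "real_of_ereal (E (\<lambda>\<omega>. g (X0 \<omega>)))"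
  have lipn: "lLip k (\<lambda>v. prod_list (map g v))" for k
    by (rule lLip_prod[OF g0 gM M1 L0 glip])
  have glip1: "\<bar>g a - g b\<bar> \<le> L * (1 + \<bar>a\<bar>^1 + \<bar>b\<bar>^1) * \<bar>a - b\<bar>" for a b using glip by simp
  have gX0: "(\<lambda>\<omega>. g (X0 \<omega>)) \<in> H" by (rule lip1_H[OF X0H glip1])
  have Em: "E (\<lambda>\<omega>. g (X0 \<omega>)) = ereal ?m" by (rule E_bounds(3)[OF gX0, of 0 M]) (use g0 gM in auto)
  have m0: "0 \<le> ?m" by (rule E_bounds(4)[OF gX0, of 0 M]) (use g0 gM in auto)
  have gXn: "E (\<lambda>\<omega>. g (X k \<omega>)) = ereal ?m" if "k \<ge> 1" for k
  proof -
    have l1: "lLip 1 (\<lambda>v. g (hd v))"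
      unfolding lLip_def
    proof (intro exI allI impI)
      fix x y :: "real list" assume "length x = 1" "length y = 1"
      then obtain a b where "x = [a]" "y = [b]"
        by (metis One_nat_def length_0_conv length_Suc_conv)
      then show "\<bar>g (hd x) - g (hd y)\<bar> \<le> L * (1 + vnorm x ^ 1 + vnorm y ^ 1) * vnorm (vdiff x y)"
        using glip[of a b] by (simp add: vnorm_single vdiff_single)
    qed
    have "E (\<lambda>\<omega>. g (hd [X k \<omega>])) = E (\<lambda>\<omega>. g (hd [X0 \<omega>]))"
      using distr[OF that] l1 unfolding ident_distr_def by blast
    then show ?thesis using Em by simp
  qed
  have gXH: "(\<lambda>\<omega>. g (X k \<omega>)) \<in> H" if "k \<ge> 1" for k by (rule lip1_H[OF XH[OF that] glip1])
  show ?thesis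
  proof (induction n)
    case 0 then show ?case using E_const[of 1] by simp
  next
    case (Suc n)
    show ?case
    proof (cases "n = 0")
      case True then show ?thesis using gXn[of 1] by simp
    next
      case False
      let ?Xs = "map X [1..<n+1]"
      have ind: "indep_of H E (X (n+1)) ?Xs" using indep False unfolding indep_seq_def by (simp del: upt_Suc)
      let ?\<phi> = "\<lambda>v. prod_list (map g v)"
      have fin: "\<bar>E (\<lambda>\<omega>. ?\<phi> (x @ [X (n+1) \<omega>]))\<bar> \<noteq> \<infinity>" if "length x = length ?Xs" for x :: "real list"
      proof -
        have "E (\<lambda>\<omega>. ?\<phi> (x @ [X (n+1) \<omega>])) = E (\<lambda>\<omega>. ?\<phi> x * g (X (n+1) \<omega>))" by (simp del: upt_Suc)
        also have "\<dots> = ereal (?\<phi> x * ?m)"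
          by (rule E_scale[OF gXH gXn]) (auto intro: prod_list_nonneg_map simp: g0)
        finally show ?thesis by simp
      qed
      have eq: "E (\<lambda>\<omega>. ?\<phi> (vec ?Xs \<omega> @ [X (n+1) \<omega>])) =
          E (\<lambda>\<omega>. real_of_ereal (E (\<lambda>\<omega>'. ?\<phi> (vec ?Xs \<omega> @ [X (n+1) \<omega>']))))"
        using ind lipn[of "Suc (length ?Xs)"] fin unfolding indep_of_def by blast
      have inner: "real_of_ereal (E (\<lambda>\<omega>'. ?\<phi> (vec ?Xs \<omega> @ [X (n+1) \<omega>'])))
          = ?m * prod_list (map (\<lambda>j. g (X j \<omega>)) [1..<n+1])" for \<omega>
      proof -
        have "E (\<lambda>\<omega>'. ?\<phi> (vec ?Xs \<omega> @ [X (n+1) \<omega>'])) = E (\<lambda>\<omega>'. ?\<phi> (vec ?Xs \<omega>) * g (X (n+1) \<omega>'))" by (simp del: upt_Suc)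
        also have "\<dots> = ereal (?\<phi> (vec ?Xs \<omega>) * ?m)"
          by (rule E_scale[OF gXH gXn]) (auto intro: prod_list_nonneg_map simp: g0)
        finally show ?thesis by (simp add: vec_map o_def mult.commute del: upt_Suc)
      qed
      have lhs: "(\<lambda>\<omega>. ?\<phi> (vec ?Xs \<omega> @ [X (n+1) \<omega>])) = (\<lambda>\<omega>. prod_list (map (\<lambda>j. g (X j \<omega>)) [1..<Suc n+1]))"
      proof -
        have "[1..<Suc n+1] = [1..<n+1] @ [n+1]" using upt_Suc_append[of 1 "n+1"] by simp
        then show ?thesis by (simp add: vec_map o_def del: upt_Suc)
      qed
      have PH: "(\<lambda>\<omega>. prod_list (map (\<lambda>j. g (X j \<omega>)) [1..<n+1])) \<in> H" by (rule prod_H[OF XH lipn])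
      have "E (\<lambda>\<omega>. prod_list (map (\<lambda>j. g (X j \<omega>)) [1..<Suc n+1]))
           = E (\<lambda>\<omega>. ?m * prod_list (map (\<lambda>j. g (X j \<omega>)) [1..<n+1]))"
        using eq unfolding lhs inner .
      also have "\<dots> = ereal (?m * ?m ^ n)" by (rule E_scale[OF PH Suc m0])
      finally show ?thesis by (simp del: upt_Suc)
    qed
  qed
qed

end

lemma exp_le_1py: fixes y :: real assumes "0 \<le> y" shows "exp (y - y\<^sup>2/2) \<le> 1 + y"
proof -
  let ?h = "\<lambda>t. (1 + t) * exp (-(t - t\<^sup>2/2))"
  have "?h 0 \<le> ?h y"
  proof (rule DERIV_nonneg_imp_nondecreasing[where f="\<lambda>t. (1 + t) * exp (-(t - t\<^sup>2/2))", OF assms])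
    fix x :: real assume x: "0 \<le> x" "x \<le> y"
    have "(?h has_real_derivative (exp (-(x - x\<^sup>2/2)) + (1 + x) * (exp (-(x - x\<^sup>2/2)) * (-(1 - x))))) (at x)"
      by (auto intro!: derivative_eq_intros simp: power2_eq_square)
    moreover have "exp (-(x - x\<^sup>2/2)) + (1 + x) * (exp (-(x - x\<^sup>2/2)) * (-(1 - x))) = x\<^sup>2 * exp (-(x - x\<^sup>2/2))"
      by (simp add: algebra_simps power2_eq_square)
    ultimately show "\<exists>d. (?h has_real_derivative d) (at x) \<and> 0 \<le> d" by auto
  qed
  then have "1 \<le> (1 + y) * exp (-(y - y\<^sup>2/2))" by simp
  then have "exp (y - y\<^sup>2/2) * 1 \<le> exp (y - y\<^sup>2/2) * ((1 + y) * exp (-(y - y\<^sup>2/2)))"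
    by (intro mult_left_mono) auto
  also have "\<dots> = 1 + y" by (simp add: exp_minus field_simps)
  finally show ?thesis by simp
qed

lemma exp_le_quad: fixes u :: real assumes "u \<le> 0" shows "exp u \<le> 1 + u + u\<^sup>2/2"
proof -
  let ?h = "\<lambda>t. 1 + t + t\<^sup>2/2 - exp t"
  have "?h 0 \<le> ?h u"
  proof (rule DERIV_nonpos_imp_nonincreasing[where f="\<lambda>t. 1 + t + t\<^sup>2/2 - exp t", OF assms])
    fix x :: real assume x: "u \<le> x" "x \<le> 0"
    have "(?h has_real_derivative (1 + x - exp x)) (at x)"
      by (auto intro!: derivative_eq_intros simp: power2_eq_square)
    moreover have "1 + x - exp x \<le> 0" using exp_ge_add_one_self[of x] by simp
    ultimately show "\<exists>d. (?h has_real_derivative d) (at x) \<and> d \<le> 0" by auto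
  qed
  then show ?thesis by simp
qed

lemma fbound:
  fixes a y :: real assumes a: "0 < a" "a \<le> 1"
  shows "exp (y - y\<^sup>2/2) \<le> 1 + y + a * min (y\<^sup>2) (a\<^sup>2) + 2 * max (\<bar>y\<bar> - a/2) 0"
proof -
  have nn: "0 \<le> a * min (y\<^sup>2) (a\<^sup>2)" "0 \<le> 2 * max (\<bar>y\<bar> - a/2) 0" using a by auto
  consider "0 \<le> y" | "-a \<le> y" "y < 0" | "y < -a" by linarith
  then show ?thesis
  proof cases
    case 1 then show ?thesis using exp_le_1py[OF 1] nn by linarith
  next
    case 2
    let ?u = "y - y\<^sup>2/2"
    have "?u \<le> 0" using 2 by (simp add: power2_eq_square)
    then have "exp ?u \<le> 1 + ?u + ?u\<^sup>2/2" by (rule exp_le_quad)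
    also have "\<dots> = 1 + y - y^3/2 + y^4/8" unfolding power2_eq_square power3_eq_cube power4_eq_xxxx by (simp add: field_simps)
    also have "\<dots> \<le> 1 + y + a * y\<^sup>2"
    proof -
      have y1: "-1 \<le> y" using 2 a by linarith
      have yy: "y\<^sup>2 \<le> -y"
      proof -
        have "(-y)*(-y) \<le> (-y)*1" using y1 2 by (intro mult_left_mono) auto
        then show ?thesis by (simp add: power2_eq_square)
      qed
      have e1: "y^4 = y\<^sup>2 * y\<^sup>2" by (simp add: power2_eq_square power4_eq_xxxx)
      have e2: "-(y^3) = y\<^sup>2 * (-y)" by (simp add: power2_eq_square power3_eq_cube)
      moreover have "y\<^sup>2 * y\<^sup>2 \<le> y\<^sup>2 * (-y)" using yy by (intro mult_left_mono) auto
      moreover have "y\<^sup>2 * (-y) \<le> y\<^sup>2 * a" using 2 by (intro mult_left_mono) auto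
      ultimately have "y^4 \<le> - (y^3)" "- (y^3) \<le> y\<^sup>2 * a" using e1 by linarith+


      moreover have "0 \<le> -(y^3)" proof - have "0 \<le> y\<^sup>2 * (-y)" using 2 by (intro mult_nonneg_nonneg) auto then show ?thesis using e2 by linarith qed
      ultimately show ?thesis using mult.commute[of a "y\<^sup>2"] by linarith
    qed
    also have "\<dots> = 1 + y + a * min (y\<^sup>2) (a\<^sup>2)"
    proof -
      have "y\<^sup>2 \<le> a\<^sup>2" using 2 by (simp add: abs_le_square_iff[symmetric] abs_if)
      then show ?thesis by simp
    qed
    finally show ?thesis using nn by linarith
  next
    case 3
    have "y - y\<^sup>2/2 \<le> 0" using 3 a zero_le_power2[of y] by linarith
    then have "exp (y - y\<^sup>2/2) \<le> 1" by simp
    moreover have "2 * max (\<bar>y\<bar> - a/2) 0 = -2*y - a" using 3 a by auto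
    ultimately show ?thesis using nn 3 a by linarith
  qed
qed

lemma fbound_scaled:
  fixes a t c :: real assumes a: "0 < a" "a \<le> 1" and l: "0 < c"
  shows "exp (c*t - c\<^sup>2*t\<^sup>2/2) \<le> 1 + c*t + a*c\<^sup>2 * min (t\<^sup>2) ((a/c)\<^sup>2) + 2*c * max (\<bar>t\<bar> - a/(2*c)) 0"
proof -
  have "exp (c*t - (c*t)\<^sup>2/2) \<le> 1 + c*t + a * min ((c*t)\<^sup>2) (a\<^sup>2) + 2 * max (\<bar>c*t\<bar> - a/2) 0"
    by (rule fbound[OF a])
  moreover have "min ((c*t)\<^sup>2) (a\<^sup>2) = c\<^sup>2 * min (t\<^sup>2) ((a/c)\<^sup>2)"
  proof -
    have c2: "0 < c\<^sup>2" using l by simp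
    have "c\<^sup>2 * min (t\<^sup>2) ((a/c)\<^sup>2) = min (c\<^sup>2*t\<^sup>2) (c\<^sup>2 * (a/c)\<^sup>2)" using c2 by (auto simp: min_def mult_le_cancel_left_pos)
    also have "c\<^sup>2 * (a/c)\<^sup>2 = a\<^sup>2" using l by (simp add: field_simps)
    finally show ?thesis by (simp add: power_mult_distrib)
  qed
  moreover have "max (\<bar>c*t\<bar> - a/2) 0 = c * max (\<bar>t\<bar> - a/(2*c)) 0"
  proof -
    have e: "c * (\<bar>t\<bar> - a/(2*c)) = \<bar>c*t\<bar> - a/2" using l by (simp add: field_simps abs_mult)
    show ?thesis
    proof (cases "0 \<le> \<bar>t\<bar> - a/(2*c)")
      case True
      then have "0 \<le> c * (\<bar>t\<bar> - a/(2*c))" using l by simp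
      then show ?thesis using True e by simp
    next
      case False
      then have "c * (\<bar>t\<bar> - a/(2*c)) < 0" using l by (simp add: mult_pos_neg)
      then show ?thesis using False e by simp
    qed
  qed
  ultimately show ?thesis by (simp add: power_mult_distrib mult.assoc)
qed

lemma G_bound: fixes c t :: real shows "c*t - c\<^sup>2*t\<^sup>2/2 \<le> 1/2"
proof -
  have "0 \<le> (c*t - 1)\<^sup>2" by simp
  then show ?thesis by (simp add: power2_eq_square algebra_simps)
qed

lemma G_lip:
  fixes c :: real assumes l: "0 \<le> c"
  shows "\<bar>exp (c*a - c\<^sup>2*a\<^sup>2/2) - exp (c*b - c\<^sup>2*b\<^sup>2/2)\<bar>
     \<le> ((c + c\<^sup>2) * exp (1/2)) * (1 + \<bar>a\<bar> + \<bar>b\<bar>) * \<bar>a - b\<bar>"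
proof -
  let ?G = "\<lambda>t. exp (c*t - c\<^sup>2*t\<^sup>2/2)"
  let ?G' = "\<lambda>t. exp (c*t - c\<^sup>2*t\<^sup>2/2) * (c - c\<^sup>2*t)"
  have D: "(?G has_real_derivative ?G' t) (at t)" for t
    by (auto intro!: derivative_eq_intros simp: power2_eq_square algebra_simps)
  have bd: "\<bar>?G' t\<bar> \<le> ((c + c\<^sup>2) * exp (1/2)) * (1 + \<bar>a\<bar> + \<bar>b\<bar>)" if "\<bar>t\<bar> \<le> \<bar>a\<bar> + \<bar>b\<bar>" for t
  proof -
    have "\<bar>?G' t\<bar> = ?G t * \<bar>c - c\<^sup>2*t\<bar>" by (simp add: abs_mult)
    also have "\<dots> \<le> exp (1/2) * (c + c\<^sup>2 * (\<bar>a\<bar> + \<bar>b\<bar>))"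
    proof (rule mult_mono)
      show "?G t \<le> exp (1/2)" using G_bound[of c t] by simp
      have "\<bar>c - c\<^sup>2*t\<bar> \<le> c + c\<^sup>2 * \<bar>t\<bar>" using abs_triangle_ineq4[of c "c\<^sup>2*t"] l by (simp add: abs_mult)
      also have "\<dots> \<le> c + c\<^sup>2 * (\<bar>a\<bar> + \<bar>b\<bar>)" using that by (simp add: mult_left_mono)
      finally show "\<bar>c - c\<^sup>2*t\<bar> \<le> c + c\<^sup>2 * (\<bar>a\<bar> + \<bar>b\<bar>)" .
    qed auto
    also have "\<dots> \<le> ((c + c\<^sup>2) * exp (1/2)) * (1 + \<bar>a\<bar> + \<bar>b\<bar>)"
    proof -
      have "c + c\<^sup>2 * (\<bar>a\<bar> + \<bar>b\<bar>) \<le> (c + c\<^sup>2) * (1 + \<bar>a\<bar> + \<bar>b\<bar>)"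
        using l by (simp add: algebra_simps)
      then show ?thesis by (simp add: mult.commute mult.left_commute)
    qed
    finally show ?thesis .
  qed
  have main: "\<bar>?G u - ?G v\<bar> \<le> ((c + c\<^sup>2) * exp (1/2)) * (1 + \<bar>a\<bar> + \<bar>b\<bar>) * \<bar>u - v\<bar>"
    if uv: "u < v" "\<bar>u\<bar> \<le> \<bar>a\<bar> + \<bar>b\<bar>" "\<bar>v\<bar> \<le> \<bar>a\<bar> + \<bar>b\<bar>" for u v
  proof -
    obtain w where w: "u < w" "w < v" "?G v - ?G u = (v - u) * ?G' w"
      using MVT2[OF uv(1), of ?G ?G'] D by blast
    have "\<bar>w\<bar> \<le> \<bar>a\<bar> + \<bar>b\<bar>" using w uv by linarith
    then have "\<bar>?G' w\<bar> \<le> ((c + c\<^sup>2) * exp (1/2)) * (1 + \<bar>a\<bar> + \<bar>b\<bar>)" by (rule bd)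
    then have "\<bar>v - u\<bar> * \<bar>?G' w\<bar> \<le> \<bar>v - u\<bar> * (((c + c\<^sup>2) * exp (1/2)) * (1 + \<bar>a\<bar> + \<bar>b\<bar>))"
      by (intro mult_left_mono) auto
    moreover have "\<bar>?G u - ?G v\<bar> = \<bar>v - u\<bar> * \<bar>?G' w\<bar>"
    proof -
      have "\<bar>?G u - ?G v\<bar> = \<bar>?G v - ?G u\<bar>" by (rule abs_minus_commute)
      also have "\<dots> = \<bar>(v - u) * ?G' w\<bar>" using w(3) by (rule arg_cong)
      finally show ?thesis by (simp only: abs_mult)
    qed
    moreover have "\<bar>v - u\<bar> = \<bar>u - v\<bar>" by (rule abs_minus_commute)
    ultimately show ?thesis by (simp only: mult.commute)
  qed
  consider "a < b" | "a = b" | "b < a" by linarith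
  then show ?thesis
  proof cases
    case 1 then show ?thesis using main[of a b] by simp
  next
    case 2 then show ?thesis by simp
  next
    case 3 then show ?thesis using main[of b a] by (simp add: abs_minus_commute)
  qed
qed

context sle begin

definition lf :: "('w \<Rightarrow> real) \<Rightarrow> real \<Rightarrow> real" where
  "lf Y x = real_of_ereal (E (\<lambda>\<omega>. min ((Y \<omega>)\<^sup>2) (x\<^sup>2)))"

lemma minsq_H: assumes "Y \<in> H" shows "(\<lambda>\<omega>. min ((Y \<omega>)\<^sup>2) (x\<^sup>2)) \<in> H"
proof (rule lip1_H[OF assms, where C=1 and m=1])
  fix a b :: real
  have "\<bar>min (a\<^sup>2) (x\<^sup>2) - min (b\<^sup>2) (x\<^sup>2)\<bar> \<le> \<bar>a\<^sup>2 - b\<^sup>2\<bar>" by (simp add: min_def abs_if)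
  also have "\<dots> = \<bar>a + b\<bar> * \<bar>a - b\<bar>"
  proof -
    have "a\<^sup>2 - b\<^sup>2 = (a + b) * (a - b)" by (simp add: power2_eq_square algebra_simps)
    then show ?thesis by (simp add: abs_mult)
  qed
  also have "\<dots> \<le> (1 + \<bar>a\<bar>^1 + \<bar>b\<bar>^1) * \<bar>a - b\<bar>" by (intro mult_right_mono) auto
  finally show "\<bar>min (a\<^sup>2) (x\<^sup>2) - min (b\<^sup>2) (x\<^sup>2)\<bar> \<le> 1 * (1 + \<bar>a\<bar>^1 + \<bar>b\<bar>^1) * \<bar>a - b\<bar>" by simp
qed

lemma lf_E: assumes "Y \<in> H" shows "E (\<lambda>\<omega>. min ((Y \<omega>)\<^sup>2) (x\<^sup>2)) = ereal (lf Y x)"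
  "0 \<le> lf Y x" "lf Y x \<le> x\<^sup>2"
proof -
  have b1: "\<And>\<omega>. 0 \<le> min ((Y \<omega>)\<^sup>2) (x\<^sup>2)" by simp
  have b2: "\<And>\<omega>. min ((Y \<omega>)\<^sup>2) (x\<^sup>2) \<le> x\<^sup>2" by simp
  note B = E_bounds[OF minsq_H[OF assms, of x] b1 b2]
  show "E (\<lambda>\<omega>. min ((Y \<omega>)\<^sup>2) (x\<^sup>2)) = ereal (lf Y x)" using B(3) unfolding lf_def .
  show "0 \<le> lf Y x" using B(4) unfolding lf_def .
  show "lf Y x \<le> x\<^sup>2" using B(5) unfolding lf_def .
qed

lemma lf_mono: assumes "Y \<in> H" "0 \<le> s" "s \<le> t" shows "lf Y s \<le> lf Y t"
proof -
  have "s\<^sup>2 \<le> t\<^sup>2" using assms by (simp add: power_mono)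
  then have "E (\<lambda>\<omega>. min ((Y \<omega>)\<^sup>2) (s\<^sup>2)) \<le> E (\<lambda>\<omega>. min ((Y \<omega>)\<^sup>2) (t\<^sup>2))"
    by (intro mono_E minsq_H assms(1)) auto
  then show ?thesis using lf_E[OF assms(1)] by simp
qed

lemma lf_lip: assumes "Y \<in> H" shows "\<bar>lf Y s - lf Y t\<bar> \<le> \<bar>s\<^sup>2 - t\<^sup>2\<bar>"
proof -
  have *: "lf Y s \<le> lf Y t + \<bar>s\<^sup>2 - t\<^sup>2\<bar>" for s t
  proof -
    have "E (\<lambda>\<omega>. min ((Y \<omega>)\<^sup>2) (s\<^sup>2)) \<le> E (\<lambda>\<omega>. min ((Y \<omega>)\<^sup>2) (t\<^sup>2) + \<bar>s\<^sup>2 - t\<^sup>2\<bar>)"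
      by (intro mono_E minsq_H assms add_H const_H) (auto simp: min_def abs_if)
    also have "\<dots> \<le> E (\<lambda>\<omega>. min ((Y \<omega>)\<^sup>2) (t\<^sup>2)) + ereal \<bar>s\<^sup>2 - t\<^sup>2\<bar>" by (rule E_add_const[OF minsq_H[OF assms]])
    finally show ?thesis using lf_E[OF assms] by simp
  qed
  show ?thesis using *[of s t] *[of t s] by (simp add: abs_minus_commute abs_le_iff)
qed

lemma lf_cont: assumes "Y \<in> H" shows "continuous_on UNIV (lf Y)"
proof (rule continuous_at_imp_continuous_on, intro ballI)
  fix x :: real
  have sq: "continuous (at x) (\<lambda>s::real. s\<^sup>2)" by (intro continuous_intros)
  show "isCont (lf Y) x" unfolding continuous_at_eps_delta
  proof (intro allI impI)
    fix e :: real assume e: "0 < e"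
    from sq[unfolded continuous_at_eps_delta, rule_format, OF e]
    obtain d where d: "0 < d" "\<And>x'. dist x' x < d \<Longrightarrow> dist (x'\<^sup>2) (x\<^sup>2) < e" by blast
    show "\<exists>d>0. \<forall>x'. dist x' x < d \<longrightarrow> dist (lf Y x') (lf Y x) < e"
    proof (intro exI[of _ d] conjI allI impI)
      fix x' assume "dist x' x < d"
      then have "dist (x'\<^sup>2) (x\<^sup>2) < e" by (rule d(2))
      moreover have "dist (lf Y x') (lf Y x) \<le> dist (x'\<^sup>2) (x\<^sup>2)"
        unfolding dist_real_def by (rule lf_lip[OF assms])
      ultimately show "dist (lf Y x') (lf Y x) < e" by linarith
    qed (rule d(1))
  qed
qed

lemma max0_lip: "\<bar>max (p::real) 0 - max q 0\<bar> \<le> \<bar>p - q\<bar>" by (simp add: max_def abs_if)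
lemma minc_lip: "\<bar>min (p::real) t - min q t\<bar> \<le> \<bar>p - q\<bar>" by (simp add: min_def abs_if)
lemma tail_lip: "\<bar>max (\<bar>a\<bar> - c) 0 - max (\<bar>b\<bar> - c) 0\<bar> \<le> \<bar>a - (b::real)\<bar>"
proof -
  have "\<bar>max (\<bar>a\<bar> - c) 0 - max (\<bar>b\<bar> - c) 0\<bar> \<le> \<bar>(\<bar>a\<bar> - c) - (\<bar>b\<bar> - c)\<bar>" by (rule max0_lip)
  also have "\<dots> = \<bar>\<bar>a\<bar> - \<bar>b\<bar>\<bar>" by simp
  also have "\<dots> \<le> \<bar>a - b\<bar>" by (rule abs_triangle_ineq3)
  finally show ?thesis .
qed

lemma tailfun_H: assumes "Y \<in> H" shows "(\<lambda>\<omega>. max (\<bar>Y \<omega>\<bar> - c) 0) \<in> H"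
proof (rule lip1_H[OF assms, where C=1 and m=0])
  fix a b :: real show "\<bar>max (\<bar>a\<bar> - c) 0 - max (\<bar>b\<bar> - c) 0\<bar> \<le> 1 * (1 + \<bar>a\<bar>^0 + \<bar>b\<bar>^0) * \<bar>a - b\<bar>"
  proof -
    have "\<bar>max (\<bar>a\<bar> - c) 0 - max (\<bar>b\<bar> - c) 0\<bar> \<le> \<bar>a - b\<bar>" by (rule tail_lip)
    moreover have "\<bar>a - b\<bar> \<le> 1 * (1 + \<bar>a\<bar>^0 + \<bar>b\<bar>^0) * \<bar>a - b\<bar>" by simp
    ultimately show ?thesis by (rule order_trans)
  qed
qed

lemma piecefun_H: assumes "Y \<in> H" shows "(\<lambda>\<omega>. min (max (\<bar>Y \<omega>\<bar> - c) 0) t) \<in> H"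
proof (rule lip1_H[OF assms, where C=1 and m=0])
  fix a b :: real show "\<bar>min (max (\<bar>a\<bar> - c) 0) t - min (max (\<bar>b\<bar> - c) 0) t\<bar> \<le> 1 * (1 + \<bar>a\<bar>^0 + \<bar>b\<bar>^0) * \<bar>a - b\<bar>"
  proof -
    have "\<bar>min (max (\<bar>a\<bar> - c) 0) t - min (max (\<bar>b\<bar> - c) 0) t\<bar> \<le> \<bar>max (\<bar>a\<bar> - c) 0 - max (\<bar>b\<bar> - c) 0\<bar>" by (rule minc_lip)
    also have "\<dots> \<le> \<bar>a - b\<bar>" by (rule tail_lip)
    also have "\<bar>a - b\<bar> \<le> 1 * (1 + \<bar>a\<bar>^0 + \<bar>b\<bar>^0) * \<bar>a - b\<bar>" by simp
    finally show ?thesis .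
  qed
qed

lemma lf_double:
  assumes Y: "Y \<in> H" and t: "0 < t"
  shows "ereal (lf Y (2*t)) \<le> ereal (lf Y t) + ereal (3*t\<^sup>2) * capV H E {\<omega>. \<bar>Y \<omega>\<bar> \<ge> t}"
proof -
  let ?W = "\<lambda>\<omega>. min ((Y \<omega>)\<^sup>2) ((2*t)\<^sup>2) - min ((Y \<omega>)\<^sup>2) (t\<^sup>2)"
  have WH: "?W \<in> H"
  proof -
    have mem: "(\<lambda>\<omega>. min ((Y \<omega>)\<^sup>2) ((2*t)\<^sup>2) + (-1) * min ((Y \<omega>)\<^sup>2) (t\<^sup>2)) \<in> H"
      by (rule add_H[OF minsq_H[OF Y] smult_H[OF minsq_H[OF Y]]])
    have e: "(\<lambda>\<omega>. min ((Y \<omega>)\<^sup>2) ((2*t)\<^sup>2) + (-1) * min ((Y \<omega>)\<^sup>2) (t\<^sup>2)) = ?W" by (rule ext) simp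
    show ?thesis using mem unfolding e .
  qed
  have "E ?W \<le> ereal (3*t\<^sup>2) * capV H E {\<omega>. \<bar>Y \<omega>\<bar> \<ge> t}"
  proof (rule le_capV[OF WH])
    show "0 < 3*t\<^sup>2" using t by simp
    fix \<xi> \<omega> assume "\<xi> \<in> H" "\<forall>\<omega>. indicator {\<omega>. \<bar>Y \<omega>\<bar> \<ge> t} \<omega> \<le> \<xi> \<omega>"
    then have xi: "indicator {\<omega>. \<bar>Y \<omega>\<bar> \<ge> t} \<omega> \<le> \<xi> \<omega>" by blast
    show "?W \<omega> \<le> 3*t\<^sup>2 * \<xi> \<omega>"
    proof (cases "\<bar>Y \<omega>\<bar> \<ge> t")
      case True
      then have "1 \<le> \<xi> \<omega>" using xi by simp
      moreover have "?W \<omega> \<le> 3*t\<^sup>2"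
      proof -
        have "t\<^sup>2 \<le> (Y \<omega>)\<^sup>2" using True t by (simp add: abs_le_square_iff[symmetric])
        then have "min ((Y \<omega>)\<^sup>2) (t\<^sup>2) = t\<^sup>2" by simp
        moreover have "min ((Y \<omega>)\<^sup>2) ((2*t)\<^sup>2) \<le> 4*t\<^sup>2" by (simp add: power_mult_distrib)
        ultimately show ?thesis by linarith
      qed
      moreover have "3*t\<^sup>2 * 1 \<le> 3*t\<^sup>2 * \<xi> \<omega>" using \<open>1 \<le> \<xi> \<omega>\<close> by (intro mult_left_mono) auto
      ultimately show ?thesis by linarith
    next
      case False
      then have "0 \<le> \<xi> \<omega>" using xi by simp
      moreover have "?W \<omega> = 0"
      proof -
        have "(Y \<omega>)\<^sup>2 \<le> t\<^sup>2" using False t by (simp add: abs_le_square_iff[symmetric])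
        moreover have "t\<^sup>2 \<le> (2*t)\<^sup>2" using t by (simp add: power2_eq_square)
        ultimately have "(Y \<omega>)\<^sup>2 \<le> (2*t)\<^sup>2" by linarith
        then show ?thesis using \<open>(Y \<omega>)\<^sup>2 \<le> t\<^sup>2\<close> by (simp only: min_absorb1)
      qed
      ultimately show ?thesis using t by simp
    qed
  qed
  moreover have "E (\<lambda>\<omega>. min ((Y \<omega>)\<^sup>2) ((2*t)\<^sup>2)) \<le> E (\<lambda>\<omega>. min ((Y \<omega>)\<^sup>2) (t\<^sup>2)) + E ?W"
  proof -
    have "E (\<lambda>\<omega>. min ((Y \<omega>)\<^sup>2) ((2*t)\<^sup>2)) = E (\<lambda>\<omega>. min ((Y \<omega>)\<^sup>2) (t\<^sup>2) + ?W \<omega>)" by simp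
    also have "\<dots> \<le> E (\<lambda>\<omega>. min ((Y \<omega>)\<^sup>2) (t\<^sup>2)) + E ?W" by (rule subadd[OF minsq_H[OF Y] WH])
    finally show ?thesis .
  qed
  ultimately have "E (\<lambda>\<omega>. min ((Y \<omega>)\<^sup>2) ((2*t)\<^sup>2)) \<le> E (\<lambda>\<omega>. min ((Y \<omega>)\<^sup>2) (t\<^sup>2)) + ereal (3*t\<^sup>2) * capV H E {\<omega>. \<bar>Y \<omega>\<bar> \<ge> t}"
    by (meson add_left_mono order_trans)
  then show ?thesis unfolding lf_E(1)[OF Y] .
qed

lemma piece_bound:
  assumes Y: "Y \<in> H" and t: "0 < t"
  shows "E (\<lambda>\<omega>. min (max (\<bar>Y \<omega>\<bar> - t) 0) t) \<le> ereal t * capV H E {\<omega>. \<bar>Y \<omega>\<bar> \<ge> t}"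
proof (rule le_capV[OF piecefun_H[OF Y] t])
  fix \<xi> \<omega> assume "\<xi> \<in> H" "\<forall>\<omega>. indicator {\<omega>. \<bar>Y \<omega>\<bar> \<ge> t} \<omega> \<le> \<xi> \<omega>"
  then have xi: "indicator {\<omega>. \<bar>Y \<omega>\<bar> \<ge> t} \<omega> \<le> \<xi> \<omega>" by blast
  show "min (max (\<bar>Y \<omega>\<bar> - t) 0) t \<le> t * \<xi> \<omega>"
  proof (cases "\<bar>Y \<omega>\<bar> \<ge> t")
    case True
    then have "1 \<le> \<xi> \<omega>" using xi by simp
    then have "t * 1 \<le> t * \<xi> \<omega>" using t by (intro mult_left_mono) auto
    then show ?thesis by simp
  next
    case False
    then have "0 \<le> \<xi> \<omega>" using xi by simp
    then show ?thesis using False t by simp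
  qed
qed

end

lemma geom34: "(\<Sum>k<K. (3/4::real)^k) = 4 - 4 * (3/4)^K"
  by (induction K) (simp_all add: field_simps)

context sle begin

lemma tail_split:
  assumes Y: "Y \<in> H" and t: "0 < t"
  shows "E (\<lambda>\<omega>. max (\<bar>Y \<omega>\<bar> - t) 0) \<le> ereal t * capV H E {\<omega>. \<bar>Y \<omega>\<bar> \<ge> t} + E (\<lambda>\<omega>. max (\<bar>Y \<omega>\<bar> - 2*t) 0)"
proof -
  have pw: "max (\<bar>Y \<omega>\<bar> - t) 0 = min (max (\<bar>Y \<omega>\<bar> - t) 0) t + max (\<bar>Y \<omega>\<bar> - 2*t) 0" for \<omega>
  proof (cases "\<bar>Y \<omega>\<bar> \<le> t")
    case True then show ?thesis using t by simp
  next
    case False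
    show ?thesis
    proof (cases "\<bar>Y \<omega>\<bar> \<le> 2*t")
      case True
      then have "max (\<bar>Y \<omega>\<bar> - 2*t) 0 = 0" by simp
      moreover have "max (\<bar>Y \<omega>\<bar> - t) 0 = \<bar>Y \<omega>\<bar> - t" using False by simp
      moreover have "min (\<bar>Y \<omega>\<bar> - t) t = \<bar>Y \<omega>\<bar> - t" using True by simp
      ultimately show ?thesis by simp
    next
      case F2: False
      then have "max (\<bar>Y \<omega>\<bar> - 2*t) 0 = \<bar>Y \<omega>\<bar> - 2*t" by simp
      moreover have "max (\<bar>Y \<omega>\<bar> - t) 0 = \<bar>Y \<omega>\<bar> - t" using False by simp
      moreover have "min (\<bar>Y \<omega>\<bar> - t) t = t" using F2 by simp
      ultimately show ?thesis by simp
    qed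
  qed
  have "E (\<lambda>\<omega>. max (\<bar>Y \<omega>\<bar> - t) 0) = E (\<lambda>\<omega>. min (max (\<bar>Y \<omega>\<bar> - t) 0) t + max (\<bar>Y \<omega>\<bar> - 2*t) 0)"
    by (rule arg_cong[where f=E], rule ext, rule pw)
  also have "\<dots> \<le> E (\<lambda>\<omega>. min (max (\<bar>Y \<omega>\<bar> - t) 0) t) + E (\<lambda>\<omega>. max (\<bar>Y \<omega>\<bar> - 2*t) 0)"
    by (rule subadd[OF piecefun_H[OF Y] tailfun_H[OF Y]])
  also have "\<dots> \<le> ereal t * capV H E {\<omega>. \<bar>Y \<omega>\<bar> \<ge> t} + E (\<lambda>\<omega>. max (\<bar>Y \<omega>\<bar> - 2*t) 0)"
    by (rule add_right_mono[OF piece_bound[OF Y t]])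
  finally show ?thesis .
qed

lemma tail_sum:
  assumes Y: "Y \<in> H" and c: "0 < c"
    and hyp: "\<And>k. ereal (c*2^k) * capV H E {\<omega>. \<bar>Y \<omega>\<bar> \<ge> c*2^k} \<le> ereal (\<beta> k)"
  shows "E (\<lambda>\<omega>. max (\<bar>Y \<omega>\<bar> - c) 0) \<le> ereal (\<Sum>k<K. \<beta> k) + E (\<lambda>\<omega>. max (\<bar>Y \<omega>\<bar> - c*2^K) 0)"
proof (induction K)
  case 0 then show ?case by simp
next
  case (Suc K)
  have tK: "0 < c*2^K" using c by simp
  have "E (\<lambda>\<omega>. max (\<bar>Y \<omega>\<bar> - c*2^K) 0) \<le> ereal (c*2^K) * capV H E {\<omega>. \<bar>Y \<omega>\<bar> \<ge> c*2^K} + E (\<lambda>\<omega>. max (\<bar>Y \<omega>\<bar> - 2*(c*2^K)) 0)"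
    by (rule tail_split[OF Y tK])
  also have "\<dots> \<le> ereal (\<beta> K) + E (\<lambda>\<omega>. max (\<bar>Y \<omega>\<bar> - c*2^Suc K) 0)"
    using hyp[of K] by (intro add_mono) (auto simp: mult.commute mult.left_commute)
  finally have "ereal (\<Sum>k<K. \<beta> k) + E (\<lambda>\<omega>. max (\<bar>Y \<omega>\<bar> - c*2^K) 0)
      \<le> ereal (\<Sum>k<K. \<beta> k) + (ereal (\<beta> K) + E (\<lambda>\<omega>. max (\<bar>Y \<omega>\<bar> - c*2^Suc K) 0))"
    by (rule add_left_mono)
  also have "\<dots> = ereal (\<Sum>k<Suc K. \<beta> k) + E (\<lambda>\<omega>. max (\<bar>Y \<omega>\<bar> - c*2^Suc K) 0)"
    by (simp add: add.assoc[symmetric])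
  finally show ?case using Suc.IH by (rule order_trans[rotated])
qed

lemma tail_bound:
  assumes Y: "Y \<in> H" and eps: "0 < \<epsilon>" "\<epsilon> \<le> 1/6" and T: "0 < T"
    and hypI: "\<And>x. x \<ge> T \<Longrightarrow> capV H E {\<omega>. \<bar>Y \<omega>\<bar> \<ge> x} \<le> ereal (\<epsilon> * lf Y x / x\<^sup>2)"
    and III: "((\<lambda>c. E (\<lambda>\<omega>. max (\<bar>Y \<omega>\<bar> - c) 0)) \<longlongrightarrow> 0) at_top"
    and c: "c \<ge> T"
  shows "E (\<lambda>\<omega>. max (\<bar>Y \<omega>\<bar> - c) 0) \<le> ereal (4 * \<epsilon> * lf Y c / c)"
proof -
  have c0: "0 < c" using c T by linarith
  define t where "t k = c * 2^k" for k :: nat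
  have tT: "t k \<ge> T" for k
  proof -
    have "c * 1 \<le> c * 2^k" using c0 by (intro mult_left_mono) auto
    then show ?thesis using c unfolding t_def by linarith
  qed
  have t0: "0 < t k" for k using tT[of k] T by linarith
  have L0: "0 \<le> lf Y x" for x using lf_E(2)[OF Y] .
  have Lgrow: "lf Y (t k) \<le> (3/2)^k * lf Y c" for k
  proof (induction k)
    case 0 then show ?case by (simp add: t_def)
  next
    case (Suc k)
    have "ereal (lf Y (2 * t k)) \<le> ereal (lf Y (t k)) + ereal (3 * (t k)\<^sup>2) * capV H E {\<omega>. \<bar>Y \<omega>\<bar> \<ge> t k}"
      by (rule lf_double[OF Y t0])
    also have "\<dots> \<le> ereal (lf Y (t k)) + ereal (3 * (t k)\<^sup>2) * ereal (\<epsilon> * lf Y (t k) / (t k)\<^sup>2)"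
      using hypI[OF tT[of k]] by (intro add_left_mono ereal_mult_left_mono) auto
    also have "\<dots> = ereal (lf Y (t k) * (1 + 3 * \<epsilon>))" using t0[of k] by (simp add: field_simps)
    finally have "lf Y (2 * t k) \<le> lf Y (t k) * (1 + 3 * \<epsilon>)" by simp
    also have "\<dots> \<le> lf Y (t k) * (3/2)" using eps L0[of "t k"] by (intro mult_left_mono) auto
    also have "\<dots> \<le> (3/2)^k * lf Y c * (3/2)" using Suc by (intro mult_right_mono) auto
    finally show ?case by (simp add: t_def mult.commute mult.left_commute)
  qed
  have tm: "ereal (t k) * capV H E {\<omega>. \<bar>Y \<omega>\<bar> \<ge> t k} \<le> ereal (\<epsilon> * lf Y c / c * (3/4)^k)" for k
  proof -
    have "ereal (t k) * capV H E {\<omega>. \<bar>Y \<omega>\<bar> \<ge> t k} \<le> ereal (t k) * ereal (\<epsilon> * lf Y (t k) / (t k)\<^sup>2)"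
      using hypI[OF tT[of k]] t0[of k] by (intro ereal_mult_left_mono) auto
    also have "\<dots> = ereal (\<epsilon> * lf Y (t k) / t k)" using t0[of k] by (simp add: power2_eq_square)
    also have "\<dots> \<le> ereal (\<epsilon> * ((3/2)^k * lf Y c) / t k)"
      using Lgrow[of k] eps t0[of k] by (simp add: divide_right_mono mult_left_mono)
    also have "\<epsilon> * ((3/2)^k * lf Y c) / t k = \<epsilon> * lf Y c / c * (3/4)^k"
    proof -
      have "(2::real)^k * 2^k = 4^k" by (simp add: power_mult_distrib[symmetric])
      then show ?thesis unfolding t_def using c0 by (simp add: field_simps power_divide)
    qed
    finally show ?thesis .
  qed
  have sumb: "(\<Sum>k<K. \<epsilon> * lf Y c / c * (3/4)^k) \<le> 4 * \<epsilon> * lf Y c / c" for K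
  proof -
    have nn: "0 \<le> \<epsilon> * lf Y c / c" using eps L0[of c] c0 by simp
    have "(\<Sum>k<K. \<epsilon> * lf Y c / c * (3/4)^k) = \<epsilon> * lf Y c / c * (\<Sum>k<K. (3/4::real)^k)"
      by (simp add: sum_distrib_left)
    also have "\<dots> \<le> \<epsilon> * lf Y c / c * 4" using nn by (intro mult_left_mono) (auto simp: geom34)
    also have "\<dots> = 4 * \<epsilon> * lf Y c / c" by simp
    finally show ?thesis .
  qed
  have main: "E (\<lambda>\<omega>. max (\<bar>Y \<omega>\<bar> - c) 0) \<le> ereal (4 * \<epsilon> * lf Y c / c) + E (\<lambda>\<omega>. max (\<bar>Y \<omega>\<bar> - c*2^K) 0)" for K
  proof -
    have "E (\<lambda>\<omega>. max (\<bar>Y \<omega>\<bar> - c) 0) \<le> ereal (\<Sum>k<K. \<epsilon> * lf Y c / c * (3/4)^k) + E (\<lambda>\<omega>. max (\<bar>Y \<omega>\<bar> - c*2^K) 0)"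
      by (rule tail_sum[OF Y c0]) (use tm in \<open>simp add: t_def\<close>)
    also have "\<dots> \<le> ereal (4 * \<epsilon> * lf Y c / c) + E (\<lambda>\<omega>. max (\<bar>Y \<omega>\<bar> - c*2^K) 0)"
      using sumb[of K] by (intro add_right_mono) simp
    finally show ?thesis .
  qed
  show ?thesis
  proof (rule ereal_le_epsilon2)
    fix e :: real assume e: "0 < e"
    have "\<forall>\<^sub>F x in at_top. E (\<lambda>\<omega>. max (\<bar>Y \<omega>\<bar> - x) 0) < ereal e"
      using order_tendstoD(2)[OF III] e by (simp add: zero_ereal_def)
    then obtain N0 where N0: "\<And>x. x \<ge> N0 \<Longrightarrow> E (\<lambda>\<omega>. max (\<bar>Y \<omega>\<bar> - x) 0) < ereal e"
      unfolding eventually_at_top_linorder by blast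
    obtain K where K: "N0 / c < 2^K" using real_arch_pow[of 2 "N0/c"] by auto
    have "N0 \<le> c * 2^K" using K c0 by (simp add: field_simps)
    then have "E (\<lambda>\<omega>. max (\<bar>Y \<omega>\<bar> - c*2^K) 0) \<le> ereal e" using N0 by (simp add: order_less_imp_le)
    then show "E (\<lambda>\<omega>. max (\<bar>Y \<omega>\<bar> - c) 0) \<le> ereal (4 * \<epsilon> * lf Y c / c) + ereal e"
      using main[of K] by (meson add_left_mono order_trans)
  qed
qed

end

definition Gf :: "real \<Rightarrow> real \<Rightarrow> real" where
  "Gf c t = exp (c*t - c\<^sup>2*t\<^sup>2/2)"

lemma Gf_pos: "0 < Gf c t" by (simp add: Gf_def)
lemma Gf_le: "Gf c t \<le> exp (1/2)" unfolding Gf_def using G_bound[of c t] by simp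
lemma Gf_lip: "0 \<le> c \<Longrightarrow> \<bar>Gf c a - Gf c b\<bar> \<le> ((c + c\<^sup>2) * exp (1/2)) * (1 + \<bar>a\<bar> + \<bar>b\<bar>) * \<bar>a - b\<bar>"
  unfolding Gf_def by (rule G_lip)

context sle begin

lemma Gf_H: assumes "U \<in> H" "0 \<le> c" shows "(\<lambda>\<omega>. Gf c (U \<omega>)) \<in> H"
  by (rule lip1_H[OF assms(1), where C="(c + c\<^sup>2) * exp (1/2)" and m=1]) (use Gf_lip[OF assms(2)] in simp)

lemma Gf_E: assumes "U \<in> H" "0 \<le> c"
  shows "E (\<lambda>\<omega>. Gf c (U \<omega>)) = ereal (real_of_ereal (E (\<lambda>\<omega>. Gf c (U \<omega>))))"
    "0 \<le> real_of_ereal (E (\<lambda>\<omega>. Gf c (U \<omega>)))"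
proof -
  have b1: "\<And>\<omega>. 0 \<le> Gf c (U \<omega>)" using Gf_pos less_imp_le by blast
  have b2: "\<And>\<omega>. Gf c (U \<omega>) \<le> exp (1/2)" by (rule Gf_le)
  note B = E_bounds[OF Gf_H[OF assms] b1 b2]
  show "E (\<lambda>\<omega>. Gf c (U \<omega>)) = ereal (real_of_ereal (E (\<lambda>\<omega>. Gf c (U \<omega>))))" by (rule B(3))
  show "0 \<le> real_of_ereal (E (\<lambda>\<omega>. Gf c (U \<omega>)))" by (rule B(4))
qed

lemma mgf_bound:
  assumes X0H: "X0 \<in> H" and mean: "E X0 = 0" and a: "0 < a" "a \<le> 1" and l: "0 < c"
    and B: "E (\<lambda>\<omega>. max (\<bar>X0 \<omega>\<bar> - a/(2*c)) 0) \<le> ereal B"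
  shows "real_of_ereal (E (\<lambda>\<omega>. Gf c (X0 \<omega>))) \<le> 1 + a*c\<^sup>2 * lf X0 (a/c) + 2*c*B"
proof -
  let ?M = "\<lambda>\<omega>. min ((X0 \<omega>)\<^sup>2) ((a/c)\<^sup>2)"
  let ?T = "\<lambda>\<omega>. max (\<bar>X0 \<omega>\<bar> - a/(2*c)) 0"
  let ?S = "\<lambda>\<omega>. (a*c\<^sup>2) * ?M \<omega> + (2*c) * ?T \<omega>"
  let ?R = "\<lambda>\<omega>. (c * X0 \<omega> + ?S \<omega>) + 1"
  have MH: "?M \<in> H" by (rule minsq_H[OF X0H])
  have TH: "?T \<in> H" by (rule tailfun_H[OF X0H])
  have SH: "?S \<in> H" by (intro add_H smult_H MH TH)
  have cXH: "(\<lambda>\<omega>. c * X0 \<omega>) \<in> H" by (rule smult_H[OF X0H])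
  have RH: "?R \<in> H" by (intro add_H const_H cXH SH)
  have "E (\<lambda>\<omega>. Gf c (X0 \<omega>)) \<le> E ?R"
  proof (rule mono_E[OF Gf_H[OF X0H] RH])
    show "0 \<le> c" using l by simp
  next
    fix \<omega>
    show "Gf c (X0 \<omega>) \<le> ?R \<omega>"
      using fbound_scaled[OF a l, of "X0 \<omega>"] unfolding Gf_def by (simp add: mult.assoc)
  qed
  also have "\<dots> \<le> E (\<lambda>\<omega>. c * X0 \<omega> + ?S \<omega>) + ereal 1" by (rule E_add_const[OF add_H[OF cXH SH]])
  also have "\<dots> \<le> (E (\<lambda>\<omega>. c * X0 \<omega>) + E ?S) + ereal 1" by (intro add_right_mono subadd cXH SH)
  also have "E (\<lambda>\<omega>. c * X0 \<omega>) = 0" using homog[OF X0H l] mean by simp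
  also have "E ?S \<le> E (\<lambda>\<omega>. (a*c\<^sup>2) * ?M \<omega>) + E (\<lambda>\<omega>. (2*c) * ?T \<omega>)" by (intro subadd smult_H MH TH)
  also have "E (\<lambda>\<omega>. (a*c\<^sup>2) * ?M \<omega>) = ereal (a*c\<^sup>2) * ereal (lf X0 (a/c))"
    using homog[OF MH, of "a*c\<^sup>2"] a l lf_E(1)[OF X0H, of "a/c"] by simp
  also have "E (\<lambda>\<omega>. (2*c) * ?T \<omega>) = ereal (2*c) * E ?T" using homog[OF TH, of "2*c"] l by simp
  also have "ereal (2*c) * E ?T \<le> ereal (2*c) * ereal B" using B l by (intro ereal_mult_left_mono) auto
  finally have "E (\<lambda>\<omega>. Gf c (X0 \<omega>)) \<le> ereal (1 + a*c\<^sup>2 * lf X0 (a/c) + 2*c*B)"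
    by (simp add: add_right_mono add_left_mono add.commute add.left_commute)
  then show ?thesis using Gf_E[OF X0H] l by (metis ereal_less_eq(3) less_imp_le)
qed

end

lemma prod_list_upt1: "prod_list (map f [1..<n+1]) = (\<Prod>j=1..n. (f j :: real))"
proof (induction n)
  case 0 then show ?case by simp
next
  case (Suc n)
  have "[1..<Suc n+1] = [1..<n+1] @ [n+1]" using upt_Suc_append[of 1 "n+1"] by simp
  then have "prod_list (map f [1..<Suc n+1]) = prod_list (map f [1..<n+1]) * f (Suc n)" by (simp del: upt_Suc)
  also have "\<dots> = (\<Prod>j=1..Suc n. f j)" using Suc by (simp add: prod.cl_ivl_Suc)
  finally show ?case .
qed

lemma prod_Gf: "prod_list (map (\<lambda>j. Gf c (X j \<omega>)) [1..<n+1])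
    = exp (c * (\<Sum>i=1..n. X i \<omega>) - c\<^sup>2 * (\<Sum>i=1..n. (X i \<omega>)\<^sup>2) / 2)"
proof -
  have "prod_list (map (\<lambda>j. Gf c (X j \<omega>)) [1..<n+1]) = (\<Prod>j=1..n. exp (c * X j \<omega> - c\<^sup>2 * (X j \<omega>)\<^sup>2/2))"
    by (subst prod_list_upt1) (simp add: Gf_def del: upt_Suc)
  also have "\<dots> = exp (\<Sum>j=1..n. (c * X j \<omega> - c\<^sup>2 * (X j \<omega>)\<^sup>2/2))" by (simp add: exp_sum)
  also have "(\<Sum>j=1..n. (c * X j \<omega> - c\<^sup>2 * (X j \<omega>)\<^sup>2/2)) = c * (\<Sum>i=1..n. X i \<omega>) - c\<^sup>2 * (\<Sum>i=1..n. (X i \<omega>)\<^sup>2) / 2"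
    by (simp add: sum_subtractf sum_distrib_left sum_divide_distrib)
  finally show ?thesis .
qed

lemma key_ineq:
  fixes x b V S \<rho> :: real
  assumes x: "0 < x" and b: "0 < b" and bV: "b \<le> V" "V \<le> b * (1 + \<rho>)" and S: "x * V \<le> S"
  shows "x\<^sup>2 * (1 - \<rho>\<^sup>2) / 2 \<le> (x/b) * S - (x/b)\<^sup>2 * V\<^sup>2 / 2"
proof -
  define u where "u = V / b"
  have V: "V = u * b" using b by (simp add: u_def)
  have u1: "1 \<le> u" using bV b by (simp add: u_def field_simps)
  have u2: "u \<le> 1 + \<rho>" using bV b by (simp add: u_def field_simps)
  have "(x/b) * (x * V) \<le> (x/b) * S" using S x b by (intro mult_left_mono) auto
  moreover have "(x/b) * (x * V) = x\<^sup>2 * u" using b by (simp add: V power2_eq_square)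
  moreover have "(x/b)\<^sup>2 * V\<^sup>2 / 2 = x\<^sup>2 * (u\<^sup>2/2)" using b by (simp add: V power2_eq_square field_simps)
  moreover have "x\<^sup>2 * (1 - \<rho>\<^sup>2) / 2 \<le> x\<^sup>2 * u - x\<^sup>2 * (u\<^sup>2/2)"
  proof -
    have "(u - 1)\<^sup>2 \<le> \<rho>\<^sup>2" using u1 u2 by (intro power_mono) auto
    then have "(1 - \<rho>\<^sup>2) / 2 \<le> u - u\<^sup>2/2" unfolding power2_eq_square
    proof -
      assume a: "(u - 1) * (u - 1) \<le> \<rho> * \<rho>"
      have "u * u - 2*u + 1 \<le> \<rho> * \<rho>" using a by (simp add: algebra_simps)
      then show "(1 - \<rho> * \<rho>) / 2 \<le> u - u * u / 2" by (simp add: field_simps)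
    qed
    then have "x\<^sup>2 * ((1 - \<rho>\<^sup>2) / 2) \<le> x\<^sup>2 * (u - u\<^sup>2/2)" by (intro mult_left_mono) auto
    then show ?thesis by (simp add: algebra_simps)
  qed
  ultimately show ?thesis by linarith
qed

lemma grid_select:
  fixes b0 V \<rho> :: real
  assumes b0: "0 < b0" "b0 \<le> V" and top: "V \<le> b0 * (1+\<rho>)^N" and \<rho>: "0 < \<rho>"
  shows "\<exists>k\<le>N. b0 * (1+\<rho>)^k \<le> V \<and> V \<le> b0 * (1+\<rho>)^k * (1+\<rho>)"
proof -
  define P where "P k \<longleftrightarrow> V \<le> b0 * (1+\<rho>)^k * (1+\<rho>)" for k
  have PN: "P N"
  proof -
    have "b0 * (1+\<rho>)^N * 1 \<le> b0 * (1+\<rho>)^N * (1+\<rho>)" using b0 \<rho> by (intro mult_left_mono) auto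
    then show ?thesis using top unfolding P_def by linarith
  qed
  define k where "k = (LEAST k. P k)"
  have Pk: "P k" unfolding k_def by (rule LeastI[of P N]) (rule PN)
  have kN: "k \<le> N" unfolding k_def by (rule Least_le[of P N]) (rule PN)
  have low: "b0 * (1+\<rho>)^k \<le> V"
  proof (cases k)
    case 0 then show ?thesis using b0 by simp
  next
    case (Suc j)
    then have "j < k" by simp
    then have "\<not> P j" unfolding k_def by (rule not_less_Least)
    then show ?thesis unfolding P_def using Suc by (simp add: mult.assoc mult.commute mult.left_commute)
  qed
  show ?thesis using kN low Pk unfolding P_def by blast
qed

lemma pow_exp_bound:
  fixes m y :: real assumes "0 \<le> m" "m \<le> 1 + y / real n" "0 < n"
  shows "m ^ n \<le> exp y"
proof -
  have "m ^ n \<le> (1 + y / real n) ^ n" using assms by (intro power_mono) auto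
  also have "\<dots> \<le> exp (y / real n) ^ n"
  proof (rule power_mono)
    show "1 + y / real n \<le> exp (y / real n)" using exp_ge_add_one_self[of "y / real n"] by simp
    show "0 \<le> 1 + y / real n" using assms by linarith
  qed
  also have "\<dots> = exp y" using assms(3) by (simp add: exp_of_nat_mult[symmetric])
  finally show ?thesis .
qed

context sle begin

lemma E_sum:
  fixes N :: nat
  assumes "\<And>k. k \<le> N \<Longrightarrow> f k \<in> H"
  shows "(\<lambda>\<omega>. \<Sum>k\<le>N. f k \<omega>) \<in> H \<and> E (\<lambda>\<omega>. \<Sum>k\<le>N. f k \<omega>) \<le> (\<Sum>k\<le>N. E (f k))"
  using assms
proof (induction N)
  case 0
  have "(\<lambda>\<omega>. \<Sum>k\<le>0. f k \<omega>) = f 0" by (rule ext) simp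
  then show ?case using 0 by simp
next
  case (Suc N)
  have IH: "(\<lambda>\<omega>. \<Sum>k\<le>N. f k \<omega>) \<in> H" "E (\<lambda>\<omega>. \<Sum>k\<le>N. f k \<omega>) \<le> (\<Sum>k\<le>N. E (f k))"
    using Suc by auto
  have fS: "f (Suc N) \<in> H" using Suc by simp
  have e: "(\<lambda>\<omega>. \<Sum>k\<le>Suc N. f k \<omega>) = (\<lambda>\<omega>. (\<Sum>k\<le>N. f k \<omega>) + f (Suc N) \<omega>)" by (rule ext) simp
  have "E (\<lambda>\<omega>. (\<Sum>k\<le>N. f k \<omega>) + f (Suc N) \<omega>) \<le> E (\<lambda>\<omega>. \<Sum>k\<le>N. f k \<omega>) + E (f (Suc N))"
    by (rule subadd[OF IH(1) fS])
  also have "\<dots> \<le> (\<Sum>k\<le>N. E (f k)) + E (f (Suc N))" by (rule add_right_mono[OF IH(2)])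
  finally show ?case unfolding e using add_H[OF IH(1) fS] by simp
qed

end

context sle begin

lemma main_n:
  fixes X :: "nat \<Rightarrow> 'w \<Rightarrow> real" and X0 :: "'w \<Rightarrow> real"
  assumes XH: "\<And>n. n \<ge> 1 \<Longrightarrow> X n \<in> H" and X0H: "X0 \<in> H"
    and indep: "indep_seq H E X"
    and distr: "\<And>n. n \<ge> 1 \<Longrightarrow> ident_distr E (X n) X0"
    and n: "0 < n" and x: "0 < x" and Bp: "0 < Bn" and d: "0 < \<delta>" and r: "0 < \<rho>"
    and N: "3 \<le> sqrt \<delta> * (1+\<rho>)^N" and eta: "0 \<le> \<eta>"
    and mk: "\<And>k. k \<le> N \<Longrightarrow> real_of_ereal (E (\<lambda>\<omega>. Gf (x / (sqrt (\<delta>*Bn) * (1+\<rho>)^k)) (X0 \<omega>))) \<le> 1 + \<eta> * x\<^sup>2 / real n"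
  shows "capV H E {\<omega>. (\<Sum>i=1..n. X i \<omega>) \<ge> x * sqrt (\<Sum>i=1..n. (X i \<omega>)\<^sup>2) \<and>
            \<delta> * Bn \<le> (\<Sum>i=1..n. (X i \<omega>)\<^sup>2) \<and> (\<Sum>i=1..n. (X i \<omega>)\<^sup>2) \<le> 9 * Bn}
         \<le> ereal (real (Suc N) * exp (- (x\<^sup>2 * (1 - \<rho>\<^sup>2) / 2) + \<eta> * x\<^sup>2))"
proof -
  define b where "b k = sqrt (\<delta>*Bn) * (1+\<rho>)^k" for k
  define lam where "lam k = x / b k" for k
  define Kc where "Kc = x\<^sup>2 * (1 - \<rho>\<^sup>2) / 2"
  define P where "P k \<omega> = prod_list (map (\<lambda>j. Gf (lam k) (X j \<omega>)) [1..<n+1])" for k \<omega>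
  define \<xi> where "\<xi> k \<omega> = exp (- Kc) * P k \<omega>" for k \<omega>
  define m where "m k = real_of_ereal (E (\<lambda>\<omega>. Gf (lam k) (X0 \<omega>)))" for k
  let ?A = "{\<omega>. (\<Sum>i=1..n. X i \<omega>) \<ge> x * sqrt (\<Sum>i=1..n. (X i \<omega>)\<^sup>2) \<and>
            \<delta> * Bn \<le> (\<Sum>i=1..n. (X i \<omega>)\<^sup>2) \<and> (\<Sum>i=1..n. (X i \<omega>)\<^sup>2) \<le> 9 * Bn}"
  have b0: "0 < b k" for k using d Bp r by (simp add: b_def)
  have lam0: "0 < lam k" for k using x b0[of k] by (simp add: lam_def)
  have M1: "1 \<le> exp (1/2::real)" by simp
  have PH: "P k \<in> H" for k
  proof -
    have "lLip n (\<lambda>v. prod_list (map (Gf (lam k)) v))"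
      by (rule lLip_prod[OF less_imp_le[OF Gf_pos] Gf_le M1, where L="(lam k + (lam k)\<^sup>2) * exp (1/2)"])
         (use lam0[of k] Gf_lip[of "lam k"] in auto)
    from prod_H[OF XH this] show ?thesis unfolding P_def by simp
  qed
  have \<xi>H: "\<xi> k \<in> H" for k unfolding \<xi>_def by (rule smult_H[OF PH])
  have Em: "E (\<lambda>\<omega>. Gf (lam k) (X0 \<omega>)) = ereal (m k)" "0 \<le> m k" for k
    using Gf_E[OF X0H less_imp_le[OF lam0[of k]]] unfolding m_def by auto
  have EP: "E (P k) = ereal (m k ^ n)" for k
  proof -
    have "E (\<lambda>\<omega>. prod_list (map (\<lambda>j. Gf (lam k) (X j \<omega>)) [1..<n+1])) = ereal ((real_of_ereal (E (\<lambda>\<omega>. Gf (lam k) (X0 \<omega>)))) ^ n)"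
      by (rule indep_prod[OF XH X0H indep distr less_imp_le[OF Gf_pos] Gf_le M1, where L="(lam k + (lam k)\<^sup>2) * exp (1/2)"])
         (use lam0[of k] Gf_lip[of "lam k"] in auto)
    then show ?thesis unfolding P_def m_def by simp
  qed
  have E\<xi>: "E (\<xi> k) = ereal (exp (- Kc) * m k ^ n)" for k
    unfolding \<xi>_def using homog[OF PH, of "exp (- Kc)"] EP[of k] by simp
  have mpow: "m k ^ n \<le> exp (\<eta> * x\<^sup>2)" if "k \<le> N" for k
    by (rule pow_exp_bound[OF Em(2)]) (use mk[OF that] n in \<open>simp_all add: m_def lam_def b_def\<close>)
  have \<xi>nn: "0 \<le> \<xi> k \<omega>" for k \<omega>
    unfolding \<xi>_def P_def prod_Gf by simp
  have sumH: "(\<lambda>\<omega>. \<Sum>k\<le>N. \<xi> k \<omega>) \<in> H" and sumE: "E (\<lambda>\<omega>. \<Sum>k\<le>N. \<xi> k \<omega>) \<le> (\<Sum>k\<le>N. E (\<xi> k))"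
    using E_sum[of N \<xi>] \<xi>H by auto
  have ind: "indicator ?A \<omega> \<le> (\<Sum>k\<le>N. \<xi> k \<omega>)" for \<omega>
  proof (cases "\<omega> \<in> ?A")
    case False then show ?thesis using \<xi>nn by (simp add: sum_nonneg)
  next
    case True
    let ?S = "\<Sum>i=1..n. X i \<omega>" and ?V2 = "\<Sum>i=1..n. (X i \<omega>)\<^sup>2"
    let ?V = "sqrt ?V2"
    have A: "x * ?V \<le> ?S" "\<delta> * Bn \<le> ?V2" "?V2 \<le> 9 * Bn" using True by auto
    have V2nn: "0 \<le> ?V2" by (simp add: sum_nonneg)
    have low: "b 0 \<le> ?V" unfolding b_def using A(2) by (simp add: real_sqrt_le_mono)
    have top: "?V \<le> b 0 * (1+\<rho>)^N"
    proof -
      have "?V \<le> sqrt (9 * Bn)" using A(3) by (simp add: real_sqrt_le_mono)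
      also have "\<dots> = 3 * sqrt Bn" by (simp add: real_sqrt_mult)
      also have "\<dots> \<le> (sqrt \<delta> * (1+\<rho>)^N) * sqrt Bn" using N Bp by (intro mult_right_mono) auto
      also have "\<dots> = b 0 * (1+\<rho>)^N" by (simp add: b_def real_sqrt_mult)
      finally show ?thesis .
    qed
    obtain k where k: "k \<le> N" "b 0 * (1+\<rho>)^k \<le> ?V" "?V \<le> b 0 * (1+\<rho>)^k * (1+\<rho>)"
      using grid_select[OF b0[of 0] low top r] by blast
    have bk: "b k = b 0 * (1+\<rho>)^k" by (simp add: b_def)
    have "Kc \<le> lam k * ?S - (lam k)\<^sup>2 * ?V\<^sup>2 / 2"
      unfolding Kc_def lam_def by (rule key_ineq[OF x b0 _ _ A(1)]) (use k bk in auto)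
    also have "?V\<^sup>2 = ?V2" using V2nn by simp
    finally have KS: "Kc \<le> lam k * ?S - (lam k)\<^sup>2 * ?V2 / 2" .
    have "1 \<le> \<xi> k \<omega>"
    proof -
      have "P k \<omega> = exp (lam k * ?S - (lam k)\<^sup>2 * ?V2 / 2)" unfolding P_def by (rule prod_Gf)
      then have "\<xi> k \<omega> = exp (- Kc + (lam k * ?S - (lam k)\<^sup>2 * ?V2 / 2))" unfolding \<xi>_def by (metis mult_exp_exp)
      moreover have "0 \<le> - Kc + (lam k * ?S - (lam k)\<^sup>2 * ?V2 / 2)" using KS by linarith
      ultimately show ?thesis by simp
    qed
    also have "\<xi> k \<omega> \<le> (\<Sum>k\<le>N. \<xi> k \<omega>)" using k(1) \<xi>nn by (intro member_le_sum) auto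
    finally show ?thesis using True by simp
  qed
  have "capV H E ?A \<le> E (\<lambda>\<omega>. \<Sum>k\<le>N. \<xi> k \<omega>)" by (rule capV_le[OF sumH ind])
  also have "\<dots> \<le> (\<Sum>k\<le>N. E (\<xi> k))" by (rule sumE)
  also have "\<dots> = ereal (\<Sum>k\<le>N. exp (- Kc) * m k ^ n)" by (simp add: E\<xi>)
  also have "\<dots> \<le> ereal (\<Sum>k\<le>N. exp (- Kc) * exp (\<eta> * x\<^sup>2))"
  proof -
    have "(\<Sum>k\<le>N. exp (- Kc) * m k ^ n) \<le> (\<Sum>k\<le>N. exp (- Kc) * exp (\<eta> * x\<^sup>2))"
      by (intro sum_mono mult_left_mono mpow) auto
    then show ?thesis by simp
  qed
  also have "\<dots> = ereal (real (Suc N) * exp (- (x\<^sup>2 * (1 - \<rho>\<^sup>2) / 2) + \<eta> * x\<^sup>2))"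
    unfolding Kc_def by (simp only: sum_constant card_atMost mult_exp_exp)
  finally show ?thesis .
qed

end

lemma H1:
  fixes a e lam x n B lz \<delta> \<eta> LA LC :: real
  assumes a: "0 < a" and e: "0 \<le> e" and lam: "0 < lam" and x: "0 < x" and n: "0 < n"
    and lz: "0 < lz" and B: "B = n * lz" and d: "0 < \<delta>" and eta: "0 < \<eta>"
    and LA: "0 \<le> LA" "LA \<le> lz" and LC: "0 \<le> LC" "LC \<le> lz"
    and lam2: "lam\<^sup>2 \<le> x\<^sup>2 / (\<delta> * B)"
    and aeta: "a \<le> \<eta> * \<delta> / 2" and eeta: "e \<le> a * \<eta> * \<delta> / 32"
  shows "1 + a * lam\<^sup>2 * LA + 2 * lam * (4 * e * LC / (a / (2 * lam))) \<le> 1 + \<eta> * x\<^sup>2 / n"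
proof -
  have eq: "2 * lam * (4 * e * LC / (a / (2 * lam))) = (16 * e / a) * lam\<^sup>2 * LC"
    using a lam by (simp add: field_simps power2_eq_square)
  have l2: "0 \<le> lam\<^sup>2" by simp
  have c1: "a * lam\<^sup>2 * LA \<le> a * lam\<^sup>2 * lz" using a LA by (intro mult_left_mono) auto
  have c2: "(16 * e / a) * lam\<^sup>2 * LC \<le> (16 * e / a) * lam\<^sup>2 * lz" using a e LC by (intro mult_left_mono) auto
  have "a * lam\<^sup>2 * lz + (16 * e / a) * lam\<^sup>2 * lz = (a + 16 * e / a) * (lam\<^sup>2 * lz)" by (simp add: algebra_simps)
  also have "\<dots> \<le> (a + 16 * e / a) * (x\<^sup>2 / (\<delta> * n))"
  proof (rule mult_left_mono)
    have "lam\<^sup>2 * lz \<le> x\<^sup>2 / (\<delta> * B) * lz" using lam2 lz by (intro mult_right_mono) auto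
    also have "\<dots> = x\<^sup>2 / (\<delta> * n)" using B lz n d by (simp add: field_simps)
    finally show "lam\<^sup>2 * lz \<le> x\<^sup>2 / (\<delta> * n)" .
    show "0 \<le> a + 16 * e / a" using a e by simp
  qed
  also have "\<dots> \<le> (\<eta> * \<delta>) * (x\<^sup>2 / (\<delta> * n))"
  proof (rule mult_right_mono)
    have "16 * e / a \<le> \<eta> * \<delta> / 2"
    proof -
      have "16 * e \<le> a * (\<eta> * \<delta> / 2)" using eeta by simp
      then show ?thesis using a by (simp add: field_simps)
    qed
    then show "a + 16 * e / a \<le> \<eta> * \<delta>" using aeta by simp
    show "0 \<le> x\<^sup>2 / (\<delta> * n)" using d n by simp
  qed
  also have "\<dots> = \<eta> * x\<^sup>2 / n" using d n by (simp add: field_simps)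
  finally show ?thesis using eq c1 c2 by linarith
qed

lemma build_g:
  fixes R :: "real \<Rightarrow> nat \<Rightarrow> bool" and x :: "nat \<Rightarrow> real"
  assumes mono: "\<And>w w' n. R w n \<Longrightarrow> w \<le> w' \<Longrightarrow> R w' n"
    and ev: "\<And>\<eta>. 0 < \<eta> \<Longrightarrow> eventually (\<lambda>n. R (\<eta> * (x n)\<^sup>2) n) sequentially"
  shows "\<exists>g. g \<in> o(\<lambda>n. (x n)\<^sup>2) \<and> eventually (\<lambda>n. R (g n) n) sequentially"
proof -
  define Z where "Z n = {\<eta>. 0 < \<eta> \<and> R (\<eta> * (x n)\<^sup>2) n}" for n
  define \<epsilon> where "\<epsilon> n = Inf (Z n)" for n
  define g where "g n = (\<epsilon> n + 1 / (real n + 1)) * (x n)\<^sup>2" for n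
  have bdd: "bdd_below (Z n)" for n unfolding Z_def by (rule bdd_belowI[of _ 0]) auto
  have eps_le: "\<epsilon> n \<le> \<eta>" if "0 < \<eta>" "R (\<eta> * (x n)\<^sup>2) n" for n \<eta>
    unfolding \<epsilon>_def by (rule cInf_lower[OF _ bdd]) (use that in \<open>simp add: Z_def\<close>)
  have eps_ge: "0 \<le> \<epsilon> n" if "Z n \<noteq> {}" for n
    unfolding \<epsilon>_def by (rule cInf_greatest[OF that]) (auto simp: Z_def)
  have Rg: "R (g n) n" if "R (1 * (x n)\<^sup>2) n" for n
  proof -
    have "1 \<in> Z n" using that unfolding Z_def by simp
    then have ne: "Z n \<noteq> {}" by blast
    have "Inf (Z n) < \<epsilon> n + 1 / (real n + 1)" unfolding \<epsilon>_def by simp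
    then obtain \<eta> where \<eta>: "\<eta> \<in> Z n" "\<eta> < \<epsilon> n + 1 / (real n + 1)"
      using cInf_less_iff[OF ne bdd] by blast
    have "\<eta> * (x n)\<^sup>2 \<le> g n" unfolding g_def using \<eta>(2) by (intro mult_right_mono) auto
    then show ?thesis using mono \<eta>(1) unfolding Z_def by blast
  qed
  have "eventually (\<lambda>n. R (g n) n) sequentially"
  proof -
    have "eventually (\<lambda>n. R (1 * (x n)\<^sup>2) n) sequentially" by (rule ev) simp
    then show ?thesis by (rule eventually_mono) (rule Rg)
  qed
  moreover have "g \<in> o(\<lambda>n. (x n)\<^sup>2)"
  proof (rule landau_o.smallI)
    fix c :: real assume c: "0 < c"
    have e1: "eventually (\<lambda>n. R ((c/2) * (x n)\<^sup>2) n) sequentially" by (rule ev) (use c in simp)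
    have e2: "eventually (\<lambda>n. 1 / (real n + 1) \<le> c/2) sequentially"
    proof -
      obtain N :: nat where N: "2 / c < real N" using reals_Archimedean2 by blast
      show ?thesis unfolding eventually_sequentially
      proof (intro exI allI impI)
        fix n assume "N \<le> n"
        then have "2 / c < real n + 1" using N by linarith
        then have "2 < c * (real n + 1)" using c by (simp add: field_simps)
        then show "1 / (real n + 1) \<le> c/2" using c by (simp add: field_simps)
      qed
    qed
    show "eventually (\<lambda>n. norm (g n) \<le> c * norm ((x n)\<^sup>2)) sequentially"
      using e1 e2
    proof (rule eventually_elim2)
      fix n assume h1: "R ((c/2) * (x n)\<^sup>2) n" and h2: "1 / (real n + 1) \<le> c/2"
      have "c/2 \<in> Z n" using h1 c unfolding Z_def by simp
      then have ne: "Z n \<noteq> {}" by blast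
      have "\<epsilon> n \<le> c/2" using eps_le[OF _ h1] c by simp
      moreover have "0 \<le> \<epsilon> n" using eps_ge[OF ne] .
      moreover have "0 \<le> 1 / (real n + 1)" by simp
      ultimately have f: "0 \<le> \<epsilon> n + 1 / (real n + 1)" "\<epsilon> n + 1 / (real n + 1) \<le> c" using h2 by linarith+
      have "norm (g n) = (\<epsilon> n + 1 / (real n + 1)) * (x n)\<^sup>2" unfolding g_def using f by simp
      also have "\<dots> \<le> c * (x n)\<^sup>2" using f by (intro mult_right_mono) auto
      finally show "norm (g n) \<le> c * norm ((x n)\<^sup>2)" by simp
    qed
  qed
  ultimately show ?thesis by blast
qed

context sle begin

lemma lf_small:
  assumes Y: "Y \<in> H" and III: "((\<lambda>c. E (\<lambda>\<omega>. max (\<bar>Y \<omega>\<bar> - c) 0)) \<longlongrightarrow> 0) at_top" and q: "0 < q"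
  shows "\<exists>S>0. \<forall>s\<ge>S. lf Y s \<le> q * s\<^sup>2"
proof -
  have "\<forall>\<^sub>F c in at_top. E (\<lambda>\<omega>. max (\<bar>Y \<omega>\<bar> - c) 0) < ereal 1"
    using order_tendstoD(2)[OF III] by (simp add: zero_ereal_def)
  then obtain c0 where c0: "\<And>c. c \<ge> c0 \<Longrightarrow> E (\<lambda>\<omega>. max (\<bar>Y \<omega>\<bar> - c) 0) < ereal 1"
    unfolding eventually_at_top_linorder by blast
  define c where "c = max c0 0"
  have c: "0 \<le> c" "E (\<lambda>\<omega>. max (\<bar>Y \<omega>\<bar> - c) 0) \<le> ereal 1" using c0[of c] by (auto simp: c_def)
  have bound: "lf Y s \<le> 4 * c\<^sup>2 + 2 * s" if s: "0 < s" for s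
  proof -
    let ?T = "\<lambda>\<omega>. max (\<bar>Y \<omega>\<bar> - c) 0"
    have TH: "?T \<in> H" by (rule tailfun_H[OF Y])
    have pw: "min ((Y \<omega>)\<^sup>2) (s\<^sup>2) \<le> 2 * s * ?T \<omega> + 4 * c\<^sup>2" for \<omega>
    proof (cases "\<bar>Y \<omega>\<bar> \<le> 2 * c")
      case True
      then have "\<bar>Y \<omega>\<bar> \<le> \<bar>2*c\<bar>" using c by simp
      then have "(Y \<omega>)\<^sup>2 \<le> (2*c)\<^sup>2" by (simp only: abs_le_square_iff)
      moreover have "0 \<le> 2 * s * ?T \<omega>" using s by simp
      ultimately show ?thesis by (simp add: power_mult_distrib)
    next
      case False
      have m: "min ((Y \<omega>)\<^sup>2) (s\<^sup>2) \<le> s * \<bar>Y \<omega>\<bar>"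
      proof (cases "\<bar>Y \<omega>\<bar> \<le> s")
        case True
        then have "\<bar>Y \<omega>\<bar> * \<bar>Y \<omega>\<bar> \<le> s * \<bar>Y \<omega>\<bar>" by (intro mult_right_mono) auto
        then show ?thesis by (simp add: power2_eq_square abs_mult_self_eq)
      next
        case F: False
        then have "s * s \<le> s * \<bar>Y \<omega>\<bar>" using s by (intro mult_left_mono) auto
        then show ?thesis by (simp add: power2_eq_square)
      qed
      have "\<bar>Y \<omega>\<bar> \<le> 2 * ?T \<omega>" using False c by simp
      then have "s * \<bar>Y \<omega>\<bar> \<le> s * (2 * ?T \<omega>)" using s by (intro mult_left_mono) auto
      moreover have "s * (2 * ?T \<omega>) = 2 * s * ?T \<omega>" by simp
      moreover have "0 \<le> 4 * c\<^sup>2" by simp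
      ultimately show ?thesis using m by linarith
    qed
    have "E (\<lambda>\<omega>. min ((Y \<omega>)\<^sup>2) (s\<^sup>2)) \<le> E (\<lambda>\<omega>. 2 * s * ?T \<omega> + 4 * c\<^sup>2)"
      by (rule mono_E[OF minsq_H[OF Y] add_H[OF smult_H[OF TH] const_H] pw])
    also have "\<dots> \<le> E (\<lambda>\<omega>. 2 * s * ?T \<omega>) + ereal (4 * c\<^sup>2)" by (rule E_add_const[OF smult_H[OF TH]])
    finally have e1: "E (\<lambda>\<omega>. min ((Y \<omega>)\<^sup>2) (s\<^sup>2)) \<le> E (\<lambda>\<omega>. 2 * s * ?T \<omega>) + ereal (4 * c\<^sup>2)" .
    have "E (\<lambda>\<omega>. 2 * s * ?T \<omega>) = ereal (2 * s) * E ?T" using homog[OF TH, of "2 * s"] s by simp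
    also have "ereal (2 * s) * E ?T \<le> ereal (2 * s) * ereal 1" using c(2) s by (intro ereal_mult_left_mono) auto
    finally have e2: "E (\<lambda>\<omega>. 2 * s * ?T \<omega>) \<le> ereal (2 * s)" by simp
    have "E (\<lambda>\<omega>. min ((Y \<omega>)\<^sup>2) (s\<^sup>2)) \<le> ereal (2 * s) + ereal (4 * c\<^sup>2)"
      using e1 add_right_mono[OF e2, of "ereal (4 * c\<^sup>2)"] by (rule order_trans)
    then have "E (\<lambda>\<omega>. min ((Y \<omega>)\<^sup>2) (s\<^sup>2)) \<le> ereal (2 * s + 4 * c\<^sup>2)" by simp
    then show ?thesis using lf_E(1)[OF Y, of s] by simp
  qed
  define S where "S = max 1 ((2 + 4 * c\<^sup>2) / q)"
  have S: "0 < S" by (simp add: S_def)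
  have "lf Y s \<le> q * s\<^sup>2" if "s \<ge> S" for s
  proof -
    have s1: "1 \<le> s" using that by (simp add: S_def)
    have s2: "(2 + 4 * c\<^sup>2) / q \<le> s" using that by (simp add: S_def)
    then have "2 + 4 * c\<^sup>2 \<le> q * s" using q by (simp add: field_simps)
    then have "(2 + 4 * c\<^sup>2) * s \<le> q * s * s" using s1 by (intro mult_right_mono) auto
    moreover have "4 * c\<^sup>2 * 1 \<le> 4 * c\<^sup>2 * s" using s1 by (intro mult_left_mono) auto
    ultimately have "4 * c\<^sup>2 + 2 * s \<le> q * s\<^sup>2" by (simp add: power2_eq_square algebra_simps)
    then show ?thesis using bound[of s] s1 by linarith
  qed
  then show ?thesis using S by blast
qed

end

context sle begin

lemma eta_step:
  fixes X :: "nat \<Rightarrow> 'w \<Rightarrow> real" and X0 :: "'w \<Rightarrow> real" and xs :: "nat \<Rightarrow> real" and z :: "nat \<Rightarrow> real"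
  assumes XH: "\<And>n. n \<ge> 1 \<Longrightarrow> X n \<in> H" and X0H: "X0 \<in> H"
    and indep: "indep_seq H E X"
    and distr: "\<And>n. n \<ge> 1 \<Longrightarrow> ident_distr E (X n) X0"
    and mean: "E X0 = 0"
    and I': "\<And>e. e > 0 \<Longrightarrow> \<forall>\<^sub>F x in at_top. capV H E {\<omega>. \<bar>X0 \<omega>\<bar> \<ge> x} \<le> ereal (e * lf X0 x / x\<^sup>2)"
    and III: "((\<lambda>c. E (\<lambda>\<omega>. max (\<bar>X0 \<omega>\<bar> - c) 0)) \<longlongrightarrow> 0) at_top"
    and xpos: "eventually (\<lambda>n. 0 < xs n) sequentially"
    and xinf: "filterlim xs at_top sequentially"
    and xsmall: "\<And>c. c > 0 \<Longrightarrow> eventually (\<lambda>n. (xs n)\<^sup>2 \<le> c * real n) sequentially"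
    and L0: "0 < L0"
    and zprop: "\<And>n. 0 < n \<Longrightarrow> 0 < xs n \<Longrightarrow> 0 < z n \<and> L0 \<le> lf X0 (z n) \<and> lf X0 (z n) \<le> (xs n)\<^sup>2 / real n * (z n)\<^sup>2"
    and d: "0 < \<delta>" "\<delta> < 1"
    and eta: "0 < \<eta>"
  shows "eventually (\<lambda>n. capV H E {\<omega>. (\<Sum>i=1..n. X i \<omega>) \<ge> xs n * sqrt (\<Sum>i=1..n. (X i \<omega>)\<^sup>2) \<and>
                   \<delta> * real n * lf X0 (z n) \<le> (\<Sum>i=1..n. (X i \<omega>)\<^sup>2) \<and>
                   (\<Sum>i=1..n. (X i \<omega>)\<^sup>2) \<le> 9 * real n * lf X0 (z n)}
       \<le> ereal (exp (- (xs n)\<^sup>2 / 2 + \<eta> * (xs n)\<^sup>2))) sequentially"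
proof -
  define \<eta>1 where "\<eta>1 = min \<eta> 1 / 4"
  have \<eta>1: "0 < \<eta>1" "\<eta>1 \<le> 1/4" "4 * \<eta>1 \<le> \<eta>" using eta by (auto simp: \<eta>1_def)
  define \<rho> where "\<rho> = \<eta>1"
  have r: "0 < \<rho>" "\<rho> < 1" using \<eta>1 by (auto simp: \<rho>_def)
  obtain N where N0: "3 / sqrt \<delta> < (1+\<rho>)^N" using real_arch_pow[of "1+\<rho>" "3 / sqrt \<delta>"] r by auto
  have N: "3 \<le> sqrt \<delta> * (1+\<rho>)^N" using N0 d by (simp add: field_simps)
  have pN: "1 \<le> (1+\<rho>)^N" using r by simp
  define a where "a = min (1 / (1+\<rho>)^N) (\<eta>1 * \<delta> / 2)"
  have a: "0 < a" "a \<le> 1" "a * (1+\<rho>)^N \<le> 1" "a \<le> \<eta>1 * \<delta> / 2"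
  proof -
    show "0 < a" using r \<eta>1 d by (simp add: a_def)
    have "1 / (1+\<rho>)^N \<le> 1" using pN by simp
    then show "a \<le> 1" by (simp add: a_def)
    have "a * (1+\<rho>)^N \<le> 1 / (1+\<rho>)^N * (1+\<rho>)^N" using pN by (intro mult_right_mono) (auto simp: a_def)
    moreover have "1 / (1+\<rho>)^N * (1+\<rho>)^N = 1" using pN r by simp
    ultimately show "a * (1+\<rho>)^N \<le> 1" by linarith
    show "a \<le> \<eta>1 * \<delta> / 2" by (simp add: a_def)
  qed
  define e' where "e' = min (1/6) (a * \<eta>1 * \<delta> / 32)"
  have e': "0 < e'" "e' \<le> 1/6" "e' \<le> a * \<eta>1 * \<delta> / 32" using a \<eta>1 d by (auto simp: e'_def)
  obtain T1 where T1: "\<And>x. x \<ge> T1 \<Longrightarrow> capV H E {\<omega>. \<bar>X0 \<omega>\<bar> \<ge> x} \<le> ereal (e' * lf X0 x / x\<^sup>2)"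
    using I'[OF e'(1)] unfolding eventually_at_top_linorder by blast
  define T where "T = max T1 1"
  have T: "0 < T" by (simp add: T_def)
  have tb: "E (\<lambda>\<omega>. max (\<bar>X0 \<omega>\<bar> - c) 0) \<le> ereal (4 * e' * lf X0 c / c)" if "c \<ge> T" for c
    by (rule tail_bound[OF X0H e'(1,2) T _ III that]) (use T1 in \<open>auto simp: T_def\<close>)
  define c' where "c' = \<delta> * L0 * a\<^sup>2 / (4 * T\<^sup>2)"
  have c': "0 < c'" using d L0 a T by (simp add: c'_def)
  define K where "K = sqrt (ln (real (Suc N)) / \<eta>1)"
  have ev1: "eventually (\<lambda>n. (0::nat) < n) sequentially" by (rule eventually_gt_at_top)
  have ev3: "eventually (\<lambda>n. K \<le> xs n) sequentially" using xinf unfolding filterlim_at_top by blast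
  have ev4: "eventually (\<lambda>n. (xs n)\<^sup>2 \<le> c' * real n) sequentially" by (rule xsmall[OF c'])
  show ?thesis
    using eventually_conj[OF ev1 eventually_conj[OF xpos eventually_conj[OF ev3 ev4]]]
  proof (rule eventually_mono, elim conjE)
    fix n :: nat assume n: "0 < n" and x: "0 < xs n" and xK: "K \<le> xs n" and xc: "(xs n)\<^sup>2 \<le> c' * real n"
    let ?x = "xs n"
    obtain z0 lz where zz: "z0 = z n" "lz = lf X0 (z n)" by blast
    have zp: "0 < z0" "L0 \<le> lz" "lz \<le> ?x\<^sup>2 / real n * z0\<^sup>2" using zprop[OF n x] zz by auto
    have lz0: "0 < lz" using zp L0 by linarith
    define Bn where "Bn = real n * lz"
    have Bp: "0 < Bn" using n lz0 by (simp add: Bn_def)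
    have Bxz: "Bn \<le> ?x\<^sup>2 * z0\<^sup>2"
    proof -
      have "Bn \<le> real n * (?x\<^sup>2 / real n * z0\<^sup>2)" unfolding Bn_def using zp n by (intro mult_left_mono) auto
      also have "\<dots> = ?x\<^sup>2 * z0\<^sup>2" using n by simp
      finally show ?thesis .
    qed
    have sBxz: "sqrt Bn \<le> ?x * z0"
    proof -
      have "sqrt Bn \<le> sqrt ((?x * z0)\<^sup>2)" using Bxz by (intro real_sqrt_le_mono) (simp add: power_mult_distrib)
      also have "\<dots> = ?x * z0" using x zp by simp
      finally show ?thesis .
    qed
    have sdB: "0 < sqrt (\<delta> * Bn)" using d Bp by simp
    have sdB2: "sqrt (\<delta> * Bn) \<le> sqrt Bn" using d Bp by (intro real_sqrt_le_mono) simp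
    have bigB: "2 * ?x * T / a \<le> sqrt (\<delta> * Bn)"
    proof -
      have "4 * ?x\<^sup>2 * T\<^sup>2 / a\<^sup>2 \<le> \<delta> * L0 * real n"
      proof -
        have "4 * T\<^sup>2 / a\<^sup>2 * ?x\<^sup>2 \<le> 4 * T\<^sup>2 / a\<^sup>2 * (c' * real n)" using xc by (intro mult_left_mono) auto
        also have "\<dots> = \<delta> * L0 * real n" using T a by (simp add: c'_def field_simps)
        finally show ?thesis by (simp add: field_simps)
      qed
      also have "\<dots> \<le> \<delta> * Bn" unfolding Bn_def using d zp n by (simp add: mult_left_mono)
      finally have "(2 * ?x * T / a)\<^sup>2 \<le> \<delta> * Bn" by (simp add: power_mult_distrib power_divide)
      then have "sqrt ((2 * ?x * T / a)\<^sup>2) \<le> sqrt (\<delta> * Bn)" by (rule real_sqrt_le_mono)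
      then show ?thesis using x T a by simp
    qed
    have mk: "real_of_ereal (E (\<lambda>\<omega>. Gf (?x / (sqrt (\<delta>*Bn) * (1+\<rho>)^k)) (X0 \<omega>))) \<le> 1 + \<eta>1 * ?x\<^sup>2 / real n"
      if k: "k \<le> N" for k
    proof -
      define b where "b = sqrt (\<delta>*Bn) * (1+\<rho>)^k"
      define lam where "lam = ?x / b"
      have pk: "1 \<le> (1+\<rho>)^k" "(1+\<rho>)^k \<le> (1+\<rho>)^N" using r k by (auto intro: power_increasing)
      have b_low: "sqrt (\<delta>*Bn) \<le> b" unfolding b_def using pk sdB by (simp add: mult_le_cancel_left1)
      have b0: "0 < b" using b_low sdB by linarith
      have lam0: "0 < lam" using x b0 by (simp add: lam_def)
      have ab: "a * b \<le> sqrt Bn"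
      proof -
        have "a * b \<le> a * (sqrt (\<delta>*Bn) * (1+\<rho>)^N)" unfolding b_def using a pk sdB by (intro mult_left_mono) auto
        also have "\<dots> = (a * (1+\<rho>)^N) * sqrt (\<delta>*Bn)" by simp
        also have "\<dots> \<le> 1 * sqrt (\<delta>*Bn)" using a sdB by (intro mult_right_mono) auto
        finally have "a * b \<le> 1 * sqrt (\<delta>*Bn)" .
        then show ?thesis using sdB2 by linarith
      qed
      have aL: "a / lam = a * b / ?x" using x b0 by (simp add: lam_def)
      have aLz: "a / lam \<le> z0"
      proof -
        have "a * b / ?x \<le> (?x * z0) / ?x" using ab sBxz x by (intro divide_right_mono) auto
        then show ?thesis using aL x by simp
      qed
      define c where "c = a / (2 * lam)"
      have c_eq: "c = a * b / (2 * ?x)" using x b0 by (simp add: c_def lam_def)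
      have cT: "T \<le> c"
      proof -
        have "2 * ?x * T / a \<le> b" using bigB b_low by linarith
        then have "2 * ?x * T \<le> a * b" using a by (simp add: field_simps)
        then show ?thesis unfolding c_eq using x by (simp add: field_simps)
      qed
      have c0: "0 \<le> c" using cT T by linarith
      have caL: "c \<le> a / lam" unfolding c_def using a lam0 by (simp add: field_simps)
      have tbc: "E (\<lambda>\<omega>. max (\<bar>X0 \<omega>\<bar> - a/(2*lam)) 0) \<le> ereal (4 * e' * lf X0 c / c)"
        using tb[OF cT] unfolding c_def .
      have mgf: "real_of_ereal (E (\<lambda>\<omega>. Gf lam (X0 \<omega>))) \<le> 1 + a*lam\<^sup>2 * lf X0 (a/lam) + 2*lam*(4 * e' * lf X0 c / c)"
        by (rule mgf_bound[OF X0H mean a(1,2) lam0 tbc])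
      have lam2: "lam\<^sup>2 \<le> ?x\<^sup>2 / (\<delta> * Bn)"
      proof -
        have "lam \<le> ?x / sqrt (\<delta>*Bn)" unfolding lam_def using x b_low sdB b0 by (intro divide_left_mono) auto
        then have "lam\<^sup>2 \<le> (?x / sqrt (\<delta>*Bn))\<^sup>2" using lam0 by (intro power_mono) auto
        also have "\<dots> = ?x\<^sup>2 / (\<delta> * Bn)" using d Bp by (simp add: power_divide)
        finally show ?thesis .
      qed
      have LA: "0 \<le> lf X0 (a/lam)" "lf X0 (a/lam) \<le> lz"
        using lf_E(2)[OF X0H] lf_mono[OF X0H _ aLz] a lam0 zz by auto
      have LC: "0 \<le> lf X0 c" "lf X0 c \<le> lz"
        using lf_E(2)[OF X0H] lf_mono[OF X0H c0 order_trans[OF caL aLz]] zz by auto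
      have "1 + a*lam\<^sup>2 * lf X0 (a/lam) + 2*lam*(4 * e' * lf X0 c / (a / (2 * lam))) \<le> 1 + \<eta>1 * ?x\<^sup>2 / real n"
        by (rule H1[OF a(1) less_imp_le[OF e'(1)] lam0 x _ lz0 Bn_def d(1) \<eta>1(1) LA LC lam2 a(4) e'(3)]) (use n in simp)
      then have "real_of_ereal (E (\<lambda>\<omega>. Gf lam (X0 \<omega>))) \<le> 1 + \<eta>1 * ?x\<^sup>2 / real n"
        using mgf unfolding c_def by linarith
      then show ?thesis unfolding lam_def b_def .
    qed
    have main: "capV H E {\<omega>. (\<Sum>i=1..n. X i \<omega>) \<ge> ?x * sqrt (\<Sum>i=1..n. (X i \<omega>)\<^sup>2) \<and>
            \<delta> * Bn \<le> (\<Sum>i=1..n. (X i \<omega>)\<^sup>2) \<and> (\<Sum>i=1..n. (X i \<omega>)\<^sup>2) \<le> 9 * Bn}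
         \<le> ereal (real (Suc N) * exp (- (?x\<^sup>2 * (1 - \<rho>\<^sup>2) / 2) + \<eta>1 * ?x\<^sup>2))"
      by (rule main_n[OF XH X0H indep distr n x Bp d(1) r(1) N less_imp_le[OF \<eta>1(1)] mk])
    have fin: "real (Suc N) * exp (- (?x\<^sup>2 * (1 - \<rho>\<^sup>2) / 2) + \<eta>1 * ?x\<^sup>2) \<le> exp (- ?x\<^sup>2 / 2 + \<eta> * ?x\<^sup>2)"
    proof -
      have lnN: "ln (real (Suc N)) \<le> \<eta>1 * ?x\<^sup>2"
      proof -
        have K0: "0 \<le> ln (real (Suc N)) / \<eta>1" using \<eta>1 by simp
        have "K\<^sup>2 \<le> ?x\<^sup>2" using xK K0 by (intro power_mono) (auto simp: K_def)
        then have "ln (real (Suc N)) / \<eta>1 \<le> ?x\<^sup>2" using K0 by (simp add: K_def)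
        then show ?thesis using \<eta>1 by (simp add: field_simps)
      qed
      have "real (Suc N) = exp (ln (real (Suc N)))" by simp
      then have "real (Suc N) * exp (- (?x\<^sup>2 * (1 - \<rho>\<^sup>2) / 2) + \<eta>1 * ?x\<^sup>2)
          = exp (ln (real (Suc N)) + (- (?x\<^sup>2 * (1 - \<rho>\<^sup>2) / 2) + \<eta>1 * ?x\<^sup>2))"
        by (metis mult_exp_exp)
      also have "\<dots> \<le> exp (- ?x\<^sup>2 / 2 + \<eta> * ?x\<^sup>2)"
      proof (rule exp_le_cancel_iff[THEN iffD2])
        have r2: "\<rho>\<^sup>2 \<le> \<eta>1" using r unfolding \<rho>_def power2_eq_square by (simp add: mult_le_cancel_left1)
        have x2: "0 \<le> ?x\<^sup>2" by simp
        have f1: "\<rho>\<^sup>2 * ?x\<^sup>2 \<le> \<eta>1 * ?x\<^sup>2" using r2 x2 by (rule mult_right_mono)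
        have f2: "(4 * \<eta>1) * ?x\<^sup>2 \<le> \<eta> * ?x\<^sup>2" using \<eta>1(3) x2 by (rule mult_right_mono)
        have f3: "?x\<^sup>2 * (1 - \<rho>\<^sup>2) = ?x\<^sup>2 - \<rho>\<^sup>2 * ?x\<^sup>2" by (simp add: algebra_simps)
        have f4: "(4 * \<eta>1) * ?x\<^sup>2 = 4 * (\<eta>1 * ?x\<^sup>2)" by simp
        show "ln (real (Suc N)) + (- (?x\<^sup>2 * (1 - \<rho>\<^sup>2) / 2) + \<eta>1 * ?x\<^sup>2) \<le> - ?x\<^sup>2 / 2 + \<eta> * ?x\<^sup>2"
          using lnN f1 f2 f3 f4 mult_nonneg_nonneg[OF less_imp_le[OF \<eta>1(1)] x2] by linarith
      qed
      finally show ?thesis .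
    qed
    have seteq: "{\<omega>. (\<Sum>i=1..n. X i \<omega>) \<ge> ?x * sqrt (\<Sum>i=1..n. (X i \<omega>)\<^sup>2) \<and>
                   \<delta> * real n * lf X0 (z n) \<le> (\<Sum>i=1..n. (X i \<omega>)\<^sup>2) \<and>
                   (\<Sum>i=1..n. (X i \<omega>)\<^sup>2) \<le> 9 * real n * lf X0 (z n)}
        = {\<omega>. (\<Sum>i=1..n. X i \<omega>) \<ge> ?x * sqrt (\<Sum>i=1..n. (X i \<omega>)\<^sup>2) \<and>
            \<delta> * Bn \<le> (\<Sum>i=1..n. (X i \<omega>)\<^sup>2) \<and> (\<Sum>i=1..n. (X i \<omega>)\<^sup>2) \<le> 9 * Bn}"
      unfolding Bn_def zz by (simp add: mult.assoc)
    show "capV H E {\<omega>. (\<Sum>i=1..n. X i \<omega>) \<ge> ?x * sqrt (\<Sum>i=1..n. (X i \<omega>)\<^sup>2) \<and>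
                   \<delta> * real n * lf X0 (z n) \<le> (\<Sum>i=1..n. (X i \<omega>)\<^sup>2) \<and>
                   (\<Sum>i=1..n. (X i \<omega>)\<^sup>2) \<le> 9 * real n * lf X0 (z n)}
       \<le> ereal (exp (- ?x\<^sup>2 / 2 + \<eta> * ?x\<^sup>2))"
      unfolding seteq using main fin by (meson ereal_less_eq(3) order_trans)
  qed
qed

end

context sle begin
lemma lowerE_le:
  assumes Y: "Y \<in> H" and lo: "\<And>\<omega>. a \<le> Y \<omega>" and hi: "\<And>\<omega>. Y \<omega> \<le> b"
  shows "real_of_ereal (lowerE E Y) \<le> real_of_ereal (E Y)"
proof -
  have mY: "(\<lambda>\<omega>. - Y \<omega>) \<in> H" using smult_H[OF Y, of "-1"] by simp
  have e1: "E Y = ereal (real_of_ereal (E Y))" by (rule E_bounds(3)[OF Y lo hi])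
  have e2: "E (\<lambda>\<omega>. - Y \<omega>) = ereal (real_of_ereal (E (\<lambda>\<omega>. - Y \<omega>)))"
    by (rule E_bounds(3)[OF mY, of "-b" "-a"]) (use lo hi in auto)
  have "0 = E (\<lambda>\<omega>. Y \<omega> + - Y \<omega>)" using E_const[of 0] by (simp add: zero_ereal_def)
  also have "\<dots> \<le> E Y + E (\<lambda>\<omega>. - Y \<omega>)" by (rule subadd[OF Y mY])
  finally have "0 \<le> real_of_ereal (E Y) + real_of_ereal (E (\<lambda>\<omega>. - Y \<omega>))"
    using e1 e2 by (metis ereal_less_eq(3) plus_ereal.simps(1) zero_ereal_def)
  moreover have "real_of_ereal (lowerE E Y) = - real_of_ereal (E (\<lambda>\<omega>. - Y \<omega>))"
    unfolding lowerE_def using e2 by (metis real_of_ereal.simps(1) uminus_ereal.simps(1))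
  ultimately show ?thesis by linarith
qed
end

theorem proposition4p2:
  fixes H :: "('w \<Rightarrow> real) set" and E :: "('w \<Rightarrow> real) \<Rightarrow> ereal"
    and X0 :: "'w \<Rightarrow> real" and X :: "nat \<Rightarrow> 'w \<Rightarrow> real" and xs :: "nat \<Rightarrow> real"
    and l lc :: "real \<Rightarrow> real" and b0 :: real and z :: "nat \<Rightarrow> real" and \<delta> :: real
  assumes space: "sublinear_expectation_space H E"
    and X0H: "X0 \<in> H" and XH: "\<And>n. n \<ge> 1 \<Longrightarrow> X n \<in> H"
    and indep: "indep_seq H E X"
    and distr: "\<And>n. n \<ge> 1 \<Longrightarrow> ident_distr E (X n) X0"
    and mean0: "E X0 = 0" "lowerE E X0 = 0"
    and l_def: "\<And>x. l x = real_of_ereal (E (\<lambda>\<omega>. min ((X0 \<omega>)\<^sup>2) (x\<^sup>2)))"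
    and lc_def: "\<And>x. lc x = real_of_ereal (lowerE E (\<lambda>\<omega>. min ((X0 \<omega>)\<^sup>2) (x\<^sup>2)))"
    and I: "\<And>e. e > 0 \<Longrightarrow>
             \<forall>\<^sub>F x in at_top. capV H E {\<omega>. \<bar>X0 \<omega>\<bar> \<ge> x} \<le> ereal (e * l x / x\<^sup>2)"
    and II: "\<exists>C. \<forall>\<^sub>F x in at_top. lc x > 0 \<and> l x / lc x \<le> C"
    and III: "((\<lambda>c. E (\<lambda>\<omega>. max (\<bar>X0 \<omega>\<bar> - c) 0)) \<longlongrightarrow> 0) at_top"
    and IV: "filterlim xs at_top sequentially" "xs \<in> o(\<lambda>n. sqrt (real n))"
    and b0_def: "b0 = Inf {x. x \<ge> 0 \<and> l x > 0}"
    and z_def: "\<And>n. z n = Inf {s. s \<ge> b0 + 1 \<and> l s / s\<^sup>2 \<le> (xs n)\<^sup>2 / real n}"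
    and \<delta>: "0 < \<delta>" "\<delta> < 1"
  shows "\<exists>g :: nat \<Rightarrow> real. g \<in> o(\<lambda>n. (xs n)\<^sup>2) \<and>
    (\<forall>\<^sub>F n in sequentially.
       capV H E {\<omega>. (\<Sum>i=1..n. X i \<omega>) \<ge> xs n * sqrt (\<Sum>i=1..n. (X i \<omega>)\<^sup>2) \<and>
                   \<delta> * real n * l (z n) \<le> (\<Sum>i=1..n. (X i \<omega>)\<^sup>2) \<and>
                   (\<Sum>i=1..n. (X i \<omega>)\<^sup>2) \<le> 9 * real n * l (z n)}
       \<le> ereal (exp (- (xs n)\<^sup>2 / 2 + g n)))"
proof -
  interpret sle H E by (rule sle.intro[OF space])
  have lf_eq: "l = lf X0" by (rule ext) (simp add: l_def lf_def)
  have lc_le: "lc x \<le> l x" for x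
    unfolding lc_def l_def by (rule lowerE_le[OF minsq_H[OF X0H, of x], where a=0 and b="x\<^sup>2"]) auto
  obtain x1 where x1: "0 \<le> x1" "0 < l x1"
  proof -
    obtain C where "\<forall>\<^sub>F x in at_top. lc x > 0 \<and> l x / lc x \<le> C" using II by blast
    then obtain N where N: "\<And>x. x \<ge> N \<Longrightarrow> lc x > 0" unfolding eventually_at_top_linorder by blast
    have "lc (max N 0) > 0" by (rule N) simp
    then have "l (max N 0) > 0" using lc_le[of "max N 0"] by linarith
    then show ?thesis using that[of "max N 0"] by simp
  qed
  define Pset where "Pset = {x. x \<ge> 0 \<and> l x > 0}"
  have Pne: "Pset \<noteq> {}" using x1 unfolding Pset_def by blast
  have Pbdd: "bdd_below Pset" unfolding Pset_def by (rule bdd_belowI[of _ 0]) auto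
  have b0nn: "0 \<le> b0" unfolding b0_def Pset_def[symmetric] by (rule cInf_greatest[OF Pne]) (auto simp: Pset_def)
  obtain x0 where x0: "x0 \<in> Pset" "x0 < b0 + 1"
    using cInf_less_iff[OF Pne Pbdd, of "b0 + 1"] unfolding b0_def Pset_def[symmetric] by auto
  define L0 where "L0 = l x0"
  have L0: "0 < L0" using x0 unfolding Pset_def L0_def by auto
  have x0nn: "0 \<le> x0" using x0 unfolding Pset_def by auto
  have zprop: "0 < z n \<and> L0 \<le> lf X0 (z n) \<and> lf X0 (z n) \<le> (xs n)\<^sup>2 / real n * (z n)\<^sup>2"
    if n: "0 < n" and x: "0 < xs n" for n
  proof -
    define q where "q = (xs n)\<^sup>2 / real n"
    have q: "0 < q" using n x by (simp add: q_def)
    define Z' where "Z' = {s. b0 + 1 \<le> s \<and> l s \<le> q * s\<^sup>2}"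
    have Zeq: "{s. s \<ge> b0 + 1 \<and> l s / s\<^sup>2 \<le> (xs n)\<^sup>2 / real n} = Z'"
    proof -
      have "l s / s\<^sup>2 \<le> q \<longleftrightarrow> l s \<le> q * s\<^sup>2" if "b0 + 1 \<le> s" for s
      proof -
        have "0 < s\<^sup>2" using that b0nn by simp
        then show ?thesis by (simp add: pos_divide_le_eq)
      qed
      then show ?thesis unfolding Z'_def q_def by auto
    qed
    obtain S where S: "0 < S" "\<And>s. s \<ge> S \<Longrightarrow> lf X0 s \<le> q * s\<^sup>2" using lf_small[OF X0H III q] by blast
    have Zne: "Z' \<noteq> {}"
    proof -
      have "max S (b0+1) \<in> Z'" unfolding Z'_def using S(2)[of "max S (b0+1)"] lf_eq by simp
      then show ?thesis by blast
    qed
    have Zbdd: "bdd_below Z'" unfolding Z'_def by (rule bdd_belowI[of _ "b0+1"]) auto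
    have Zcl: "closed Z'"
    proof -
      have "Z' = {s. b0 + 1 \<le> s} \<inter> {s. l s \<le> q * s\<^sup>2}" unfolding Z'_def by auto
      moreover have "closed {s. b0 + 1 \<le> s}" by (rule closed_Collect_le) (intro continuous_intros)+
      moreover have "closed {s. l s \<le> q * s\<^sup>2}"
        by (rule closed_Collect_le) (use lf_cont[OF X0H] lf_eq in \<open>auto intro!: continuous_intros\<close>)
      ultimately show ?thesis by auto
    qed
    have zin: "z n \<in> Z'" unfolding z_def Zeq by (rule closed_contains_Inf[OF Zne Zbdd Zcl])
    have z1: "b0 + 1 \<le> z n" "l (z n) \<le> q * (z n)\<^sup>2" using zin unfolding Z'_def by auto
    have "l x0 \<le> l (z n)" unfolding lf_eq by (rule lf_mono[OF X0H x0nn]) (use x0 z1 in linarith)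
    then show ?thesis using z1 b0nn unfolding L0_def q_def lf_eq by auto
  qed
  have xpos: "eventually (\<lambda>n. 0 < xs n) sequentially"
    using IV(1) unfolding filterlim_at_top_dense by blast
  have xsmall: "eventually (\<lambda>n. (xs n)\<^sup>2 \<le> c * real n) sequentially" if c: "0 < c" for c
  proof -
    have "eventually (\<lambda>n. norm (xs n) \<le> sqrt c * norm (sqrt (real n))) sequentially"
      by (rule landau_o.smallD[OF IV(2)]) (use c in simp)
    then show ?thesis
    proof (rule eventually_mono)
      fix n assume h: "norm (xs n) \<le> sqrt c * norm (sqrt (real n))"
      have "\<bar>xs n\<bar> \<le> sqrt c * sqrt (real n)" using h by simp
      then have "\<bar>xs n\<bar>\<^sup>2 \<le> (sqrt c * sqrt (real n))\<^sup>2" by (intro power_mono) auto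
      then show "(xs n)\<^sup>2 \<le> c * real n" using c by (simp add: power_mult_distrib)
    qed
  qed
  have I': "\<forall>\<^sub>F x in at_top. capV H E {\<omega>. \<bar>X0 \<omega>\<bar> \<ge> x} \<le> ereal (e * lf X0 x / x\<^sup>2)" if "e > 0" for e
    using I[OF that] unfolding lf_eq .
  define R where "R w n \<longleftrightarrow> capV H E {\<omega>. (\<Sum>i=1..n. X i \<omega>) \<ge> xs n * sqrt (\<Sum>i=1..n. (X i \<omega>)\<^sup>2) \<and>
                   \<delta> * real n * l (z n) \<le> (\<Sum>i=1..n. (X i \<omega>)\<^sup>2) \<and>
                   (\<Sum>i=1..n. (X i \<omega>)\<^sup>2) \<le> 9 * real n * l (z n)}
       \<le> ereal (exp (- (xs n)\<^sup>2 / 2 + w))" for w n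
  have Rmono: "R w' n" if "R w n" "w \<le> w'" for w w' n
  proof -
    have "ereal (exp (- (xs n)\<^sup>2 / 2 + w)) \<le> ereal (exp (- (xs n)\<^sup>2 / 2 + w'))" using that(2) by simp
    then show ?thesis using that(1) unfolding R_def by (rule order_trans[rotated])
  qed
  have Rev: "eventually (\<lambda>n. R (\<eta> * (xs n)\<^sup>2) n) sequentially" if eta: "0 < \<eta>" for \<eta>
    unfolding R_def lf_eq
    by (rule eta_step[OF XH X0H indep distr mean0(1) I' III xpos IV(1) xsmall L0 zprop \<delta> eta])
  have "\<exists>g. g \<in> o(\<lambda>n. (xs n)\<^sup>2) \<and> eventually (\<lambda>n. R (g n) n) sequentially"
  proof (rule build_g)
    fix w w' n assume "R w n" "w \<le> w'" then show "R w' n" by (rule Rmono)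
  next
    fix \<eta> :: real assume "0 < \<eta>" then show "eventually (\<lambda>n. R (\<eta> * (xs n)\<^sup>2) n) sequentially" by (rule Rev)
  qed
  then show ?thesis unfolding R_def .
qed

end
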